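(* Let $G$ be a countable group and $H$ a subgroup of finite index in $G$. If $H$ is algebraically recurrent, then $G$ is algebraically recurrent. Moreover, if every symmetric, non-degenerate, Liouville random walk on $H$ is algebraically recurrent, then every symmetric, non-degenerate, Liouville random walk on $G$ is algebraically recurrent.
   Context: For a countable group $\Gamma$ and a probability measure $\mu$ on $\Gamma$, a $\mu$-random walk is $X_n=\zeta_1\cdots\zeta_n$ with $\zeta_i$ i.i.d. of law $\mu$; $\mathcal{S}_n$ denotes the semigroup generated by $\{X_n,X_{n+1},\ldots\}$. $(\Gamma,\mu)$ is algebraically recurrent (AR) if for every $n$, $\mathcal{S}_n=\Gamma$ almost surely; $\Gamma$ is AR if $(\Gamma,\mu)$ is AR for every symmetric probability measure $\mu$ (i.e. $\mu(g)=\mu(g^{-1})$) whose support generates $\Gamma$ as a group. A random walk is symmetric if $\mu$ is symmetric, non-degenerate if the support of $\mu$ generates $\Gamma$ as a group, and Liouville if every bounded $\mu$-harmonic function is constant. *)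

theory Defs
  imports "HOL-Probability.Probability" "HOL-Algebra.Algebra"
begin

inductive_set gen_semigroup :: "('a, 'b) monoid_scheme \<Rightarrow> 'a set \<Rightarrow> 'a set"
  for G and A where
    gs_incl: "a \<in> A \<Longrightarrow> a \<in> gen_semigroup G A"
  | gs_mult: "x \<in> gen_semigroup G A \<Longrightarrow> y \<in> gen_semigroup G A
               \<Longrightarrow> x \<otimes>\<^bsub>G\<^esub> y \<in> gen_semigroup G A"

text \<open>Position n of the random walk driven by increments omega = (zeta_1, zeta_2, ...):
  X_n = zeta_1 * ... * zeta_n (X_0 is the identity).\<close>
definition rw_pos :: "('a, 'b) monoid_scheme \<Rightarrow> nat \<Rightarrow> 'a stream \<Rightarrow> 'a" where
  "rw_pos G n \<omega> = foldr (\<lambda>x y. x \<otimes>\<^bsub>G\<^esub> y) (stake n \<omega>) \<one>\<^bsub>G\<^esub>"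

definition tail_semigroup :: "('a, 'b) monoid_scheme \<Rightarrow> nat \<Rightarrow> 'a stream \<Rightarrow> 'a set" where
  "tail_semigroup G n \<omega> = gen_semigroup G {rw_pos G m \<omega> | m. n \<le> m}"

definition alg_recurrent :: "('a, 'b) monoid_scheme \<Rightarrow> 'a pmf \<Rightarrow> bool" where
  "alg_recurrent G \<mu> \<longleftrightarrow>
     (\<forall>n. AE \<omega> in stream_space (measure_pmf \<mu>). tail_semigroup G n \<omega> = carrier G)"

definition symmetric_measure :: "('a, 'b) monoid_scheme \<Rightarrow> 'a pmf \<Rightarrow> bool" where
  "symmetric_measure G \<mu> \<longleftrightarrow> (\<forall>g\<in>carrier G. pmf \<mu> g = pmf \<mu> (inv\<^bsub>G\<^esub> g))"

definition non_degenerate :: "('a, 'b) monoid_scheme \<Rightarrow> 'a pmf \<Rightarrow> bool" where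
  "non_degenerate G \<mu> \<longleftrightarrow> generate G (set_pmf \<mu>) = carrier G"

definition harmonic :: "('a, 'b) monoid_scheme \<Rightarrow> 'a pmf \<Rightarrow> ('a \<Rightarrow> real) \<Rightarrow> bool" where
  "harmonic G \<mu> f \<longleftrightarrow>
     (\<forall>g\<in>carrier G. integrable (measure_pmf \<mu>) (\<lambda>h. f (g \<otimes>\<^bsub>G\<^esub> h)) \<and>
        f g = measure_pmf.expectation \<mu> (\<lambda>h. f (g \<otimes>\<^bsub>G\<^esub> h)))"

definition liouville :: "('a, 'b) monoid_scheme \<Rightarrow> 'a pmf \<Rightarrow> bool" where
  "liouville G \<mu> \<longleftrightarrow>
     (\<forall>f. harmonic G \<mu> f \<and> (\<exists>B. \<forall>g\<in>carrier G. \<bar>f g\<bar> \<le> B)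
          \<longrightarrow> (\<forall>g\<in>carrier G. \<forall>h\<in>carrier G. f g = f h))"

definition measure_on :: "('a, 'b) monoid_scheme \<Rightarrow> 'a pmf \<Rightarrow> bool" where
  "measure_on G \<mu> \<longleftrightarrow> set_pmf \<mu> \<subseteq> carrier G"

definition AR_group :: "('a, 'b) monoid_scheme \<Rightarrow> bool" where
  "AR_group G \<longleftrightarrow>
     (\<forall>\<mu>. measure_on G \<mu> \<and> symmetric_measure G \<mu> \<and> non_degenerate G \<mu>
          \<longrightarrow> alg_recurrent G \<mu>)"

definition liouville_AR_group :: "('a, 'b) monoid_scheme \<Rightarrow> bool" where
  "liouville_AR_group G \<longleftrightarrow>
     (\<forall>\<mu>. measure_on G \<mu> \<and> symmetric_measure G \<mu> \<and> non_degenerate G \<mu> \<and> liouville G \<mu>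
          \<longrightarrow> alg_recurrent G \<mu>)"

end

theory Submission
  imports Defs
begin

locale rws = group +
  fixes H :: "'a set" and \<mu> :: "'a pmf"
  assumes cntG: "countable (carrier G)" and sub: "subgroup H G"
    and finR: "finite (rcosets\<^bsub>G\<^esub> H)"
    and mon: "set_pmf \<mu> \<subseteq> carrier G"
    and sym: "\<And>g. g \<in> carrier G \<Longrightarrow> pmf \<mu> g = pmf \<mu> (inv\<^bsub>G\<^esub> g)"
    and nd: "generate G (set_pmf \<mu>) = carrier G"
begin

abbreviation "C \<equiv> set_pmf \<mu>"

definition prodl :: "'a list \<Rightarrow> 'a" where
  "prodl w = foldr (\<lambda>x y. x \<otimes> y) w \<one>"

lemma prodl_Nil[simp]: "prodl [] = \<one>" and prodl_Cons[simp]: "prodl (a # w) = a \<otimes> prodl w"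
  by (simp_all add: prodl_def)

lemma prodl_closed[simp]: "set w \<subseteq> carrier G \<Longrightarrow> prodl w \<in> carrier G"
  by (induction w) auto

lemma prodl_append: "set v \<subseteq> carrier G \<Longrightarrow> set w \<subseteq> carrier G \<Longrightarrow> prodl (v @ w) = prodl v \<otimes> prodl w"
  by (induction v) (auto simp: m_assoc)

lemma C_carr: "x \<in> C \<Longrightarrow> x \<in> carrier G" using mon by auto

lemma lists_C_carr: "w \<in> lists C \<Longrightarrow> set w \<subseteq> carrier G" using mon by auto

lemma inv_C: "x \<in> C \<Longrightarrow> inv x \<in> C"
  using sym[of x] C_carr[of x] by (simp add: set_pmf_iff)

lemma Hsub: "H \<subseteq> carrier G" using sub subgroup.subset by blast

lemma word_exists: "g \<in> carrier G \<Longrightarrow> \<exists>w\<in>lists C. prodl w = g"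
proof -
  assume "g \<in> carrier G"
  hence "g \<in> generate G C" using nd by simp
  thus ?thesis
  proof (induction rule: generate.induct)
    case one show ?case by (intro bexI[of _ "[]"]) auto
  next
    case (incl h) thus ?case using C_carr by (intro bexI[of _ "[h]"]) auto
  next
    case (inv h) thus ?case using C_carr inv_C by (intro bexI[of _ "[inv h]"]) auto
  next
    case (eng a b)
    then obtain v w where "v \<in> lists C" "w \<in> lists C" "prodl v = a" "prodl w = b" by blast
    thus ?case using lists_C_carr by (intro bexI[of _ "v @ w"]) (auto simp: prodl_append)
  qed
qed

lemma universal_word_aux:
  assumes g: "g \<in> carrier G" and D: "finite D" "D \<subseteq> rcosets H"
  shows "\<exists>W\<in>lists C. \<forall>d\<in>D. \<forall>x\<in>d. \<exists>i\<le>length W. x \<otimes> prodl (take i W) \<in> H #> g"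
  using D
proof (induction D rule: finite_induct)
  case empty then show ?case by (intro bexI[of _ "[]"]) auto
next
  case (insert d D)
  then obtain W where W: "W \<in> lists C" "\<forall>d\<in>D. \<forall>x\<in>d. \<exists>i\<le>length W. x \<otimes> prodl (take i W) \<in> H #> g"
    by auto
  from insert obtain x0 where x0: "x0 \<in> carrier G" "d = H #> x0"
    unfolding RCOSETS_def by auto
  define y where "y = x0 \<otimes> prodl W"
  have y: "y \<in> carrier G" using x0 W lists_C_carr by (simp add: y_def)
  obtain v where v: "v \<in> lists C" "prodl v = inv y \<otimes> g"
    using word_exists[of "inv y \<otimes> g"] y g by auto
  show ?case
  proof (intro bexI[of _ "W @ v"] ballI)
    fix d' x assume d': "d' \<in> insert d D" and x: "x \<in> d'"
    show "\<exists>i\<le>length (W @ v). x \<otimes> prodl (take i (W @ v)) \<in> H #> g"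
    proof (cases "d' = d")
      case True
      with x x0 obtain h where h: "h \<in> H" "x = h \<otimes> x0" unfolding r_coset_def by auto
      have hc: "h \<in> carrier G" using h Hsub by auto
      have "x \<otimes> prodl (W @ v) = h \<otimes> ((x0 \<otimes> prodl W) \<otimes> (inv y \<otimes> g))"
        using W v lists_C_carr x0 hc g y by (simp add: prodl_append h m_assoc)
      also have "\<dots> = h \<otimes> g" using y g by (simp add: y_def[symmetric] m_assoc[symmetric])
      finally have "x \<otimes> prodl (W @ v) \<in> H #> g" using h unfolding r_coset_def by auto
      thus ?thesis by (intro exI[of _ "length (W @ v)"]) auto
    next
      case False
      with d' have "d' \<in> D" by auto
      with x W obtain i where "i \<le> length W" "x \<otimes> prodl (take i W) \<in> H #> g" by blast
      thus ?thesis by (intro exI[of _ i]) auto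
    qed
  qed (use W v in auto)
qed

lemma universal_word:
  assumes g: "g \<in> carrier G"
  shows "\<exists>W\<in>lists C. \<forall>x\<in>carrier G. \<exists>i\<le>length W. x \<otimes> prodl (take i W) \<in> H #> g"
proof -
  obtain W where W: "W \<in> lists C" "\<forall>d\<in>rcosets H. \<forall>x\<in>d. \<exists>i\<le>length W. x \<otimes> prodl (take i W) \<in> H #> g"
    using universal_word_aux[OF g finR] by auto
  show ?thesis
  proof (intro bexI[OF _ W(1)] ballI)
    fix x assume x: "x \<in> carrier G"
    have "H #> x \<in> rcosets H" using x Hsub by (intro rcosetsI)
    moreover have "x \<in> H #> x" using x sub by (rule rcos_self)
    ultimately show "\<exists>i\<le>length W. x \<otimes> prodl (take i W) \<in> H #> g" using W(2) by blast
  qed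
qed

end

lemma gen_semigroup_mono: assumes "A \<subseteq> B" shows "gen_semigroup G A \<subseteq> gen_semigroup G B"
proof
  fix x assume "x \<in> gen_semigroup G A"
  thus "x \<in> gen_semigroup G B" by (induction rule: gen_semigroup.induct) (use assms in \<open>auto intro: gen_semigroup.intros\<close>)
qed

lemma gen_semigroup_carrier_upd: "gen_semigroup (G\<lparr>carrier := K\<rparr>) A = gen_semigroup G A"
proof
  show "gen_semigroup (G\<lparr>carrier := K\<rparr>) A \<subseteq> gen_semigroup G A"
  proof
    fix x assume "x \<in> gen_semigroup (G\<lparr>carrier := K\<rparr>) A"
    thus "x \<in> gen_semigroup G A" by (induction rule: gen_semigroup.induct) (auto intro: gen_semigroup.intros)
  qed
  show "gen_semigroup G A \<subseteq> gen_semigroup (G\<lparr>carrier := K\<rparr>) A"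
  proof
    fix x assume "x \<in> gen_semigroup G A"
    thus "x \<in> gen_semigroup (G\<lparr>carrier := K\<rparr>) A"
      by (induction rule: gen_semigroup.induct) (auto intro: gen_semigroup.intros(1) gen_semigroup.intros(2)[of _ "G\<lparr>carrier := K\<rparr>", simplified])
  qed
qed

lemma rw_pos_carrier_upd: "rw_pos (G\<lparr>carrier := K\<rparr>) = rw_pos G"
  by (auto simp: rw_pos_def fun_eq_iff)

lemma tail_semigroup_carrier_upd: "tail_semigroup (G\<lparr>carrier := K\<rparr>) n \<omega> = tail_semigroup G n \<omega>"
  by (simp add: tail_semigroup_def rw_pos_carrier_upd gen_semigroup_carrier_upd)

lemma stake_streams: "\<omega> \<in> streams A \<Longrightarrow> set (stake n \<omega>) \<subseteq> A"
  by (auto simp: streams_iff_snth in_set_conv_nth)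

lemma stake_streams_lists: "\<omega> \<in> streams A \<Longrightarrow> stake n \<omega> \<in> lists A"
  using stake_streams by blast

lemma sdrop_streams: "\<omega> \<in> streams A \<Longrightarrow> sdrop n \<omega> \<in> streams A"
  by (auto simp: streams_iff_snth sdrop_snth)

context rws begin

lemma gen_semigroup_closed: assumes "A \<subseteq> carrier G" shows "gen_semigroup G A \<subseteq> carrier G"
proof
  fix x assume "x \<in> gen_semigroup G A"
  thus "x \<in> carrier G" by (induction rule: gen_semigroup.induct) (use assms in auto)
qed

lemma rw_stake: "rw_pos G n \<omega> = prodl (stake n \<omega>)"
  by (simp add: rw_pos_def prodl_def)

lemma rw_Suc_Stream: "rw_pos G (Suc m) (a ## s) = a \<otimes> rw_pos G m s"
  by (simp add: rw_stake)

lemma rw_0[simp]: "rw_pos G 0 \<omega> = \<one>" by (simp add: rw_stake)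

lemma rw_closed: "\<omega> \<in> streams (carrier G) \<Longrightarrow> rw_pos G n \<omega> \<in> carrier G"
  by (simp add: rw_stake stake_streams)

lemma rw_add: "\<omega> \<in> streams (carrier G) \<Longrightarrow> rw_pos G (m + n) \<omega> = rw_pos G m \<omega> \<otimes> rw_pos G n (sdrop m \<omega>)"
  unfolding rw_stake stake_add[symmetric, where m=m and s=\<omega> and n=n]
  by (intro prodl_append stake_streams sdrop_streams)

lemma streamsC_carr: "\<omega> \<in> streams C \<Longrightarrow> \<omega> \<in> streams (carrier G)"
  using streams_mono mon by blast

definition good :: "'a stream \<Rightarrow> bool" where
  "good \<omega> \<longleftrightarrow> \<omega> \<in> streams C \<and> (\<forall>w\<in>lists C. \<forall>n. \<exists>p\<ge>n. stake (length w) (sdrop p \<omega>) = w)"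

lemma good_streams: "good \<omega> \<Longrightarrow> \<omega> \<in> streams C" by (simp add: good_def)
lemma good_carr: "good \<omega> \<Longrightarrow> \<omega> \<in> streams (carrier G)" by (simp add: good_def streamsC_carr)

lemma good_sdrop: assumes "good \<omega>" shows "good (sdrop k \<omega>)"
  unfolding good_def
proof (intro conjI ballI allI)
  show "sdrop k \<omega> \<in> streams C" using assms by (simp add: good_def sdrop_streams)
  fix w n assume "w \<in> lists C"
  then obtain p where "p \<ge> n + k" "stake (length w) (sdrop p \<omega>) = w"
    using assms unfolding good_def by blast
  thus "\<exists>p\<ge>n. stake (length w) (sdrop p (sdrop k \<omega>)) = w"
    by (intro exI[of _ "p - k"]) auto
qed

lemma good_stl: "good \<omega> \<Longrightarrow> good (stl \<omega>)"
  using good_sdrop[of \<omega> 1] by simp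

lemma visit:
  assumes "good \<omega>" "x \<in> carrier G" "g \<in> carrier G"
  shows "\<exists>k\<ge>t. x \<otimes> rw_pos G k \<omega> \<in> H #> g"
proof -
  obtain W where W: "W \<in> lists C" "\<forall>x\<in>carrier G. \<exists>i\<le>length W. x \<otimes> prodl (take i W) \<in> H #> g"
    using universal_word[OF assms(3)] by blast
  obtain p where p: "p \<ge> t" "stake (length W) (sdrop p \<omega>) = W"
    using assms(1) W(1) unfolding good_def by blast
  have om: "\<omega> \<in> streams (carrier G)" using assms(1) by (rule good_carr)
  have "x \<otimes> rw_pos G p \<omega> \<in> carrier G" using assms om by (simp add: rw_closed)
  then obtain i where i: "i \<le> length W" "(x \<otimes> rw_pos G p \<omega>) \<otimes> prodl (take i W) \<in> H #> g"
    using W(2) by blast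
  have "take i W = stake i (sdrop p \<omega>)" using p(2) i(1) by (metis min.absorb1 take_stake)
  hence "x \<otimes> rw_pos G (p + i) \<omega> = (x \<otimes> rw_pos G p \<omega>) \<otimes> prodl (take i W)"
    using om assms by (simp add: rw_add m_assoc rw_closed sdrop_streams rw_stake[symmetric])
  thus ?thesis using i p by (intro exI[of _ "p + i"]) auto
qed

definition ret :: "'a stream \<Rightarrow> nat" where
  "ret \<omega> = (LEAST m. 1 \<le> m \<and> rw_pos G m \<omega> \<in> H)"

lemma ret_props:
  assumes "good \<omega>"
  shows "1 \<le> ret \<omega>" "rw_pos G (ret \<omega>) \<omega> \<in> H" "\<And>k. 1 \<le> k \<Longrightarrow> k < ret \<omega> \<Longrightarrow> rw_pos G k \<omega> \<notin> H"
proof -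
  obtain k where "k \<ge> 1" "\<one> \<otimes> rw_pos G k \<omega> \<in> H #> \<one>"
    using visit[OF assms, of \<one> \<one> 1] by auto
  hence k: "k \<ge> 1" "rw_pos G k \<omega> \<in> H"
    using rw_closed[OF good_carr[OF assms]] coset_mult_one[OF Hsub] by auto
  have "1 \<le> ret \<omega> \<and> rw_pos G (ret \<omega>) \<omega> \<in> H"
    unfolding ret_def by (rule LeastI[of _ k]) (use k in auto)
  thus "1 \<le> ret \<omega>" "rw_pos G (ret \<omega>) \<omega> \<in> H" by auto
  fix j assume "1 \<le> j" "j < ret \<omega>"
  thus "rw_pos G j \<omega> \<notin> H" unfolding ret_def using not_less_Least by blast
qed

definition F :: "'a stream \<Rightarrow> 'a" where
  "F \<omega> = (if good \<omega> then rw_pos G (ret \<omega>) \<omega> else \<one>)"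

definition shift :: "'a stream \<Rightarrow> 'a stream" where
  "shift \<omega> = (if good \<omega> then sdrop (ret \<omega>) \<omega> else \<omega>)"

definition Phi :: "'a stream \<Rightarrow> 'a stream" where
  "Phi \<omega> = smap F (siterate shift \<omega>)"

lemma Phi_unfold: "Phi \<omega> = F \<omega> ## Phi (shift \<omega>)"
  unfolding Phi_def by (subst siterate.ctr) simp

lemma F_in_H: "F \<omega> \<in> H"
  using ret_props(2)[of \<omega>] subgroup.one_closed[OF sub] by (auto simp: F_def)

lemma good_shift: "good \<omega> \<Longrightarrow> good (shift \<omega>)"
  by (simp add: shift_def good_sdrop)

lemma Phi_streams: "Phi \<omega> \<in> streams H"
  unfolding Phi_def streams_iff_snth using F_in_H by simp

definition R :: "'a list set" where
  "R = {w \<in> lists C. w \<noteq> [] \<and> prodl w \<in> H \<and> (\<forall>k. 1 \<le> k \<longrightarrow> k < length w \<longrightarrow> prodl (take k w) \<notin> H)}"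

lemma R_countable: "countable R"
  by (rule countable_subset[of _ "lists C"]) (auto simp: R_def)

lemma K1: assumes "good \<omega>" shows "stake (ret \<omega>) \<omega> \<in> R"
proof -
  have "stake (ret \<omega>) \<omega> \<in> lists C" using good_streams[OF assms] by (rule stake_streams_lists)
  moreover have "stake (ret \<omega>) \<omega> \<noteq> []" using ret_props(1)[OF assms] by (cases "ret \<omega>") auto
  moreover have "prodl (stake (ret \<omega>) \<omega>) \<in> H" using ret_props(2)[OF assms] by (simp add: rw_stake)
  moreover have "\<forall>k. 1 \<le> k \<longrightarrow> k < ret \<omega> \<longrightarrow> prodl (take k (stake (ret \<omega>) \<omega>)) \<notin> H"
    using ret_props(3)[OF assms] by (auto simp: take_stake rw_stake min_def)
  ultimately show ?thesis by (simp add: R_def)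
qed

lemma K2: assumes "w \<in> R" "stake (length w) \<omega> = w" shows "ret \<omega> = length w"
  unfolding ret_def
proof (rule Least_equality)
  show "1 \<le> length w \<and> rw_pos G (length w) \<omega> \<in> H"
    using assms by (auto simp: R_def rw_stake Suc_le_eq)
  fix m assume m: "1 \<le> m \<and> rw_pos G m \<omega> \<in> H"
  show "length w \<le> m"
  proof (rule ccontr)
    assume "\<not> length w \<le> m"
    hence "take m w = stake m \<omega>" using assms(2) by (metis take_stake min.absorb1 nat_le_linear)
    thus False using m assms(1) \<open>\<not> length w \<le> m\<close> by (auto simp: R_def rw_stake)
  qed
qed

lemma R_disjoint_aux:
  assumes "w \<in> R" "w' \<in> R" "stake (length w) \<omega> = w" "stake (length w') \<omega> = w'" "length w \<le> length w'"
  shows "w = w'"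
proof -
  have tk: "take (length w) w' = w" using assms(3,4,5) by (metis take_stake min.absorb1)
  have "\<not> length w < length w'"
  proof
    assume "length w < length w'"
    moreover have "1 \<le> length w" using assms(1) by (auto simp: R_def Suc_le_eq)
    ultimately have "prodl (take (length w) w') \<notin> H" using assms(2) by (auto simp: R_def)
    thus False using tk assms(1) by (auto simp: R_def)
  qed
  with tk assms(5) show ?thesis by auto
qed

lemma R_disjoint:
  assumes "w \<in> R" "w' \<in> R" "stake (length w) \<omega> = w" "stake (length w') \<omega> = w'"
  shows "w = w'"
  using R_disjoint_aux[OF assms] R_disjoint_aux[OF assms(2,1,4,3)] by (metis nat_le_linear)

lemma E1:
  assumes "good \<omega>"
  shows "(F \<omega> = x \<and> shift \<omega> \<in> B) \<longleftrightarrow> (\<exists>w\<in>R. prodl w = x \<and> stake (length w) \<omega> = w \<and> sdrop (length w) \<omega> \<in> B)"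
proof
  assume "F \<omega> = x \<and> shift \<omega> \<in> B"
  thus "\<exists>w\<in>R. prodl w = x \<and> stake (length w) \<omega> = w \<and> sdrop (length w) \<omega> \<in> B"
    using assms K1[OF assms] by (intro bexI[of _ "stake (ret \<omega>) \<omega>"]) (auto simp: F_def shift_def rw_stake)
next
  assume "\<exists>w\<in>R. prodl w = x \<and> stake (length w) \<omega> = w \<and> sdrop (length w) \<omega> \<in> B"
  then obtain w where w: "w \<in> R" "prodl w = x" "stake (length w) \<omega> = w" "sdrop (length w) \<omega> \<in> B" by blast
  have "ret \<omega> = length w" using K2[OF w(1,3)] .
  thus "F \<omega> = x \<and> shift \<omega> \<in> B" using w assms by (auto simp: F_def shift_def rw_stake)
qed

lemma T1: "good \<omega> \<Longrightarrow> \<exists>t\<ge>m. rw_pos G t \<omega> = rw_pos G m (Phi \<omega>)"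
proof (induction m arbitrary: \<omega>)
  case 0 thus ?case by (intro exI[of _ 0]) simp
next
  case (Suc m)
  obtain t where t: "t \<ge> m" "rw_pos G t (shift \<omega>) = rw_pos G m (Phi (shift \<omega>))"
    using Suc.IH[OF good_shift[OF Suc.prems]] by blast
  have "rw_pos G (ret \<omega> + t) \<omega> = rw_pos G (ret \<omega>) \<omega> \<otimes> rw_pos G t (shift \<omega>)"
    using Suc.prems by (simp add: rw_add good_carr shift_def)
  also have "\<dots> = rw_pos G (Suc m) (Phi \<omega>)"
    by (subst Phi_unfold) (simp add: rw_Suc_Stream t(2) F_def Suc.prems)
  finally show ?case using t(1) ret_props(1)[OF Suc.prems] by (intro exI[of _ "ret \<omega> + t"]) auto
qed

lemma T2:
  assumes "good \<omega>" "tail_semigroup (G\<lparr>carrier := H\<rparr>) n (Phi \<omega>) = H"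
  shows "tail_semigroup G n \<omega> = carrier G"
proof
  have om: "\<omega> \<in> streams (carrier G)" using assms(1) by (rule good_carr)
  show "tail_semigroup G n \<omega> \<subseteq> carrier G"
    unfolding tail_semigroup_def by (rule gen_semigroup_closed) (use rw_closed[OF om] in auto)
  have HS: "H \<subseteq> tail_semigroup G n \<omega>"
  proof -
    have "{rw_pos G m (Phi \<omega>) |m. n \<le> m} \<subseteq> {rw_pos G m \<omega> |m. n \<le> m}"
    proof
      fix y assume "y \<in> {rw_pos G m (Phi \<omega>) |m. n \<le> m}"
      then obtain m where m: "n \<le> m" "y = rw_pos G m (Phi \<omega>)" by blast
      then obtain t where "t \<ge> m" "rw_pos G t \<omega> = y" using T1[OF assms(1), of m] by auto
      thus "y \<in> {rw_pos G m \<omega> |m. n \<le> m}" using m by (intro CollectI exI[of _ t]) auto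
    qed
    hence "tail_semigroup G n (Phi \<omega>) \<subseteq> tail_semigroup G n \<omega>"
      unfolding tail_semigroup_def by (rule gen_semigroup_mono)
    thus ?thesis using assms(2) by (simp add: tail_semigroup_carrier_upd)
  qed
  show "carrier G \<subseteq> tail_semigroup G n \<omega>"
  proof
    fix g assume g: "g \<in> carrier G"
    obtain k where k: "k \<ge> n" "\<one> \<otimes> rw_pos G k \<omega> \<in> H #> g"
      using visit[OF assms(1) one_closed g] by blast
    then obtain h where h: "h \<in> H" "rw_pos G k \<omega> = h \<otimes> g"
      using rw_closed[OF om] unfolding r_coset_def by auto
    have hc: "h \<in> carrier G" using h Hsub by auto
    have "g = inv h \<otimes> rw_pos G k \<omega>" using h hc g by (simp add: m_assoc[symmetric])
    moreover have "inv h \<in> tail_semigroup G n \<omega>"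
      using HS h subgroup.m_inv_closed[OF sub] by auto
    moreover have "rw_pos G k \<omega> \<in> tail_semigroup G n \<omega>"
      unfolding tail_semigroup_def using k by (auto intro: gen_semigroup.gs_incl)
    ultimately show "g \<in> tail_semigroup G n \<omega>"
      unfolding tail_semigroup_def by (auto intro: gen_semigroup.gs_mult)
  qed
qed

end

lemma stake_eq_iff: "stake n \<omega> = v \<longleftrightarrow> length v = n \<and> (\<forall>i<n. \<omega> !! i = v ! i)"
  by (auto simp: list_eq_iff_nth_eq)

context rws begin

abbreviation "M \<equiv> measure_pmf \<mu>"
abbreviation "S \<equiv> stream_space (measure_pmf \<mu>)"

lemma space_S[simp]: "space S = UNIV"
  by (simp add: space_stream_space)

lemma sets_S: "sets S = sets (stream_space (count_space UNIV))"
  by (rule sets_stream_space_cong) simp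

lemma S_prob: "prob_space S"
  by (rule prob_space.prob_space_stream_space) (rule prob_space_measure_pmf)

interpretation SP: prob_space S by (rule S_prob)

lemma inS: "A \<in> sets (stream_space (count_space UNIV)) \<Longrightarrow> A \<in> sets S"
  using sets_S by simp

lemma stake_set[measurable]: "{\<omega>. stake n \<omega> = v} \<in> sets S"
proof -
  have "{\<omega>. stake n \<omega> = v} = {\<omega>\<in>space (stream_space (count_space UNIV)). length v = n \<and> (\<forall>i<n. \<omega> !! i = v ! i)}"
    by (auto simp: stake_eq_iff space_stream_space)
  also have "\<dots> \<in> sets (stream_space (count_space UNIV))" by measurable
  finally show ?thesis by (rule inS)
qed

lemma streamsC_set: "streams C \<in> sets S"
  using streams_sets[of C "M"] by simp

lemma sdrop_pre: "B \<in> sets S \<Longrightarrow> {\<omega>. sdrop k \<omega> \<in> B} \<in> sets S"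
  using measurable_sets[OF measurable_sdrop[of k "M"], of B] by (simp add: vimage_def)

lemma L_st: "streams C \<inter> {\<omega>. P (stake m \<omega>)} \<in> sets S"
proof -
  have "streams C \<inter> {\<omega>. P (stake m \<omega>)} = (\<Union>v\<in>{v\<in>lists C. P v}. streams C \<inter> {\<omega>. stake m \<omega> = v})"
  proof (intro equalityI subsetI)
    fix \<omega> assume "\<omega> \<in> streams C \<inter> {\<omega>. P (stake m \<omega>)}"
    hence a: "\<omega> \<in> streams C" "P (stake m \<omega>)" by auto
    have "stake m \<omega> \<in> {v \<in> lists C. P v}" using a stake_streams_lists[OF a(1)] by blast
    moreover have "\<omega> \<in> streams C \<inter> {\<omega>'. stake m \<omega>' = stake m \<omega>}" using a by simp
    ultimately show "\<omega> \<in> (\<Union>v\<in>{v\<in>lists C. P v}. streams C \<inter> {\<omega>. stake m \<omega> = v})" by (rule UN_I)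
  next
    fix \<omega> assume "\<omega> \<in> (\<Union>v\<in>{v\<in>lists C. P v}. streams C \<inter> {\<omega>. stake m \<omega> = v})"
    then obtain v where "v \<in> lists C" "P v" "\<omega> \<in> streams C" "stake m \<omega> = v" by blast
    thus "\<omega> \<in> streams C \<inter> {\<omega>. P (stake m \<omega>)}" by simp
  qed
  also have "\<dots> \<in> sets S"
  proof (rule sets.countable_UN')
    show "countable {v\<in>lists C. P v}" by (rule countable_subset[of _ "lists C"]) auto
    show "(\<lambda>v. streams C \<inter> {\<omega>. stake m \<omega> = v}) ` {v\<in>lists C. P v} \<subseteq> sets S"
      using streamsC_set stake_set by auto
  qed
  finally show ?thesis .
qed

lemma prodnn: "0 \<le> prod_list (map (pmf \<mu>) w)"
  by (induction w) auto

lemma pre_meas: "B \<in> sets S \<Longrightarrow> {\<omega>. stake n \<omega> = v \<and> sdrop n \<omega> \<in> B} \<in> sets S"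
  unfolding Collect_conj_eq by (intro sets.Int stake_set sdrop_pre)

lemma prefix_emeasure:
  assumes B: "B \<in> sets S"
  shows "emeasure S {\<omega>. stake (length w) \<omega> = w \<and> sdrop (length w) \<omega> \<in> B}
       = ennreal (prod_list (map (pmf \<mu>) w)) * emeasure S B"
proof (induction w)
  case Nil
  thus ?case by simp
next
  case (Cons a w)
  have meas: "{\<omega>. stake (length (a # w)) \<omega> = a # w \<and> sdrop (length (a # w)) \<omega> \<in> B} \<in> sets S"
    by (rule pre_meas[OF B])
  have "emeasure S {\<omega>. stake (length (a # w)) \<omega> = a # w \<and> sdrop (length (a # w)) \<omega> \<in> B}
     = (\<integral>\<^sup>+t. emeasure S {x\<in>space S. t ## x \<in> {\<omega>. stake (length (a # w)) \<omega> = a # w \<and> sdrop (length (a # w)) \<omega> \<in> B}} \<partial>M)"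
    by (rule prob_space.emeasure_stream_space[OF prob_space_measure_pmf meas])
  also have "\<dots> = (\<integral>\<^sup>+t. emeasure S {\<omega>. stake (length w) \<omega> = w \<and> sdrop (length w) \<omega> \<in> B} * indicator {a} t \<partial>M)"
  proof (intro nn_integral_cong)
    fix t
    show "emeasure S {x\<in>space S. t ## x \<in> {\<omega>. stake (length (a # w)) \<omega> = a # w \<and> sdrop (length (a # w)) \<omega> \<in> B}}
      = emeasure S {\<omega>. stake (length w) \<omega> = w \<and> sdrop (length w) \<omega> \<in> B} * indicator {a} t"
    proof (cases "t = a")
      case True thus ?thesis by simp
    next
      case False thus ?thesis by simp
    qed
  qed
  also have "\<dots> = emeasure S {\<omega>. stake (length w) \<omega> = w \<and> sdrop (length w) \<omega> \<in> B} * pmf \<mu> a"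
    by (simp add: nn_integral_cmult_indicator emeasure_pmf_single)
  also have "\<dots> = ennreal (pmf \<mu> a) * ennreal (prod_list (map (pmf \<mu>) w)) * emeasure S B"
    using Cons by (simp add: mult_ac)
  also have "\<dots> = ennreal (prod_list (map (pmf \<mu>) (a # w))) * emeasure S B"
    by (simp add: ennreal_mult[OF pmf_nonneg prodnn])
  finally show ?case .
qed

lemma shift_emeasure:
  assumes B: "B \<in> sets S"
  shows "emeasure S {\<omega>. sdrop k \<omega> \<in> B} = emeasure S B"
proof (induction k)
  case 0 thus ?case by simp
next
  case (Suc k)
  have "emeasure S {\<omega>. sdrop (Suc k) \<omega> \<in> B} = (\<integral>\<^sup>+t. emeasure S {x\<in>space S. t ## x \<in> {\<omega>. sdrop (Suc k) \<omega> \<in> B}} \<partial>M)"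
    by (rule prob_space.emeasure_stream_space[OF prob_space_measure_pmf sdrop_pre[OF B]])
  also have "\<dots> = (\<integral>\<^sup>+t. emeasure S {\<omega>. sdrop k \<omega> \<in> B} \<partial>M)"
    by (intro nn_integral_cong) simp
  also have "\<dots> = emeasure S B" using Suc by simp
  finally show ?case .
qed

lemma prefix_measure:
  assumes B: "B \<in> sets S"
  shows "measure S {\<omega>. stake (length w) \<omega> = w \<and> sdrop (length w) \<omega> \<in> B}
       = prod_list (map (pmf \<mu>) w) * measure S B"
proof -
  have nn: "0 \<le> prod_list (map (pmf \<mu>) w)" by (rule prodnn)
  have "ennreal (measure S {\<omega>. stake (length w) \<omega> = w \<and> sdrop (length w) \<omega> \<in> B})
      = ennreal (prod_list (map (pmf \<mu>) w) * measure S B)"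
    using prefix_emeasure[OF B, of w]
    by (simp add: SP.emeasure_eq_measure ennreal_mult[OF nn measure_nonneg])
  thus ?thesis by (rule ennreal_inj[THEN iffD1, rotated 2]) (auto intro!: mult_nonneg_nonneg prod_list_nonneg)
qed

lemma shift_measure:
  assumes B: "B \<in> sets S"
  shows "measure S {\<omega>. sdrop k \<omega> \<in> B} = measure S B"
  using shift_emeasure[OF B, of k] by (simp add: SP.emeasure_eq_measure)

lemma prod_list_pmf_le1: "prod_list (map (pmf \<mu>) w) \<le> 1"
  by (induction w) (auto intro!: mult_le_one pmf_le_1 prod_list_nonneg)

lemma prod_list_pmf_pos: "w \<in> lists C \<Longrightarrow> 0 < prod_list (map (pmf \<mu>) w)"
  by (induction w) (auto simp: pmf_positive)

lemma occurs_AE: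
  assumes w: "w \<in> lists C"
  shows "AE \<omega> in S. \<exists>p\<ge>n. stake (length w) (sdrop p \<omega>) = w"
proof (cases "w = []")
  case True thus ?thesis by (intro AE_I2) auto
next
  case False
  define L where "L = length w"
  define q where "q = prod_list (map (pmf \<mu>) w)"
  have q: "0 < q" "q \<le> 1" using prod_list_pmf_pos[OF w] prod_list_pmf_le1 by (auto simp: q_def)
  define E where "E J = {\<omega>. \<forall>j<J. stake L (sdrop (j * L) \<omega>) \<noteq> w}" for J
  have Emeas: "E J \<in> sets S" for J
  proof -
    have "E J = {\<omega>\<in>space (stream_space (count_space UNIV)). \<forall>j<J. \<not> (length w = L \<and> (\<forall>i<L. \<omega> !! (j * L + i) = w ! i))}"
      by (auto simp: E_def stake_eq_iff space_stream_space sdrop_snth)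
    also have "\<dots> \<in> sets (stream_space (count_space UNIV))" by measurable
    finally show ?thesis by (rule inS)
  qed
  have Erec: "measure S (E (Suc J)) = (1 - q) * measure S (E J)" for J
  proof -
    have eq1: "E (Suc J) = {\<omega>. sdrop L \<omega> \<in> E J} - {\<omega>. stake L \<omega> = w \<and> sdrop L \<omega> \<in> E J}"
    proof -
      have "(\<forall>j<Suc J. P j) \<longleftrightarrow> P 0 \<and> (\<forall>j<J. P (Suc j))" for P
        using less_Suc_eq_0_disj by auto
      thus ?thesis by (auto simp: E_def add.commute)
    qed
    have "measure S (E (Suc J)) = measure S {\<omega>. sdrop L \<omega> \<in> E J} - measure S {\<omega>. stake L \<omega> = w \<and> sdrop L \<omega> \<in> E J}"
      unfolding eq1
      by (rule SP.finite_measure_Diff) (auto simp: Collect_conj_eq intro!: sets.Int stake_set sdrop_pre Emeas)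
    also have "\<dots> = measure S (E J) - q * measure S (E J)"
      using shift_measure[OF Emeas, of L J] prefix_measure[OF Emeas, of w J] by (simp add: L_def q_def)
    finally show ?thesis by (simp add: algebra_simps)
  qed
  have Eval: "measure S (E J) = (1 - q) ^ J" for J
  proof (induction J)
    case 0
    have "E 0 = space S" by (auto simp: E_def)
    thus ?case using SP.prob_space by simp
  next
    case (Suc J) thus ?case by (simp add: Erec)
  qed
  define Einf where "Einf = (\<Inter>J. E J)"
  have Einf_meas: "Einf \<in> sets S" unfolding Einf_def using Emeas by auto
  have "measure S Einf = 0"
  proof (rule ccontr)
    assume "measure S Einf \<noteq> 0"
    hence pos: "measure S Einf > 0" using measure_nonneg[of S Einf] by linarith
    obtain J where J: "(1 - q) ^ J < measure S Einf" using real_arch_pow_inv[OF pos, of "1 - q"] q by auto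
    have "measure S Einf \<le> measure S (E J)"
      by (intro SP.finite_measure_mono Emeas) (auto simp: Einf_def)
    thus False using J Eval[of J] by simp
  qed
  define N where "N = {\<omega>. sdrop n \<omega> \<in> Einf}"
  have N: "N \<in> null_sets S"
    using shift_emeasure[OF Einf_meas, of n] \<open>measure S Einf = 0\<close> sdrop_pre[OF Einf_meas, of n]
    by (auto simp: N_def null_sets_def SP.emeasure_eq_measure)
  have sub: "{\<omega> \<in> space S. \<not> (\<exists>p\<ge>n. stake (length w) (sdrop p \<omega>) = w)} \<subseteq> N"
  proof (intro subsetI)
    fix \<omega> assume "\<omega> \<in> {\<omega> \<in> space S. \<not> (\<exists>p\<ge>n. stake (length w) (sdrop p \<omega>) = w)}"
    hence nz: "\<And>p. n \<le> p \<Longrightarrow> stake (length w) (sdrop p \<omega>) \<noteq> w" by auto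
    have "stake L (sdrop (j * L) (sdrop n \<omega>)) \<noteq> w" for j
      using nz[of "n + j * L"] by (simp add: L_def)
    thus "\<omega> \<in> N" by (simp add: N_def Einf_def E_def)
  qed
  show ?thesis by (rule AE_I'[OF N sub])
qed

lemma AE_streams: "AE \<omega> in S. \<omega> \<in> streams C"
proof -
  have "AE \<omega> in S. stream_all (\<lambda>x. x \<in> C) \<omega>"
    by (rule prob_space.AE_stream_all[OF prob_space_measure_pmf]) (auto simp: AE_measure_pmf_iff)
  thus ?thesis by (simp add: streams_iff_sset subset_eq)
qed

lemma AE_good: "AE \<omega> in S. good \<omega>"
proof -
  have "AE \<omega> in S. \<forall>w\<in>lists C. \<forall>n. \<exists>p\<ge>n. stake (length w) (sdrop p \<omega>) = w"
    by (subst AE_ball_countable) (auto simp: AE_all_countable intro!: occurs_AE)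
  with AE_streams show ?thesis by eventually_elim (simp add: good_def)
qed

end

context rws begin

interpretation SP: prob_space S by (rule S_prob)

lemma good_set: "{\<omega>. good \<omega>} \<in> sets S"
proof -
  have "{\<omega>. good \<omega>} = streams C \<inter> (\<Inter>w\<in>lists C. \<Inter>n\<in>UNIV. \<Union>p\<in>{p. n \<le> p}. {\<omega>. sdrop p \<omega> \<in> {x. stake (length w) x = w}})"
    unfolding good_def by blast
  also have "\<dots> \<in> sets S"
  proof (rule sets.Int[OF streamsC_set])
    have A: "(\<Union>p\<in>{p. n \<le> p}. {\<omega>. sdrop p \<omega> \<in> {x. stake (length w) x = w}}) \<in> sets S" for w :: "'a list" and n :: nat
      by (rule sets.countable_UN') (use sdrop_pre[OF stake_set] in auto)
    have B: "(\<Inter>n\<in>UNIV. \<Union>p\<in>{p. n \<le> p}. {\<omega>. sdrop p \<omega> \<in> {x. stake (length w) x = w}}) \<in> sets S" for w :: "'a list"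
      by (rule sets.countable_INT') (use A in \<open>auto simp: countableI_type\<close>)
    show "(\<Inter>w\<in>lists C. \<Inter>n\<in>UNIV. \<Union>p\<in>{p. n \<le> p}. {\<omega>. sdrop p \<omega> \<in> {x. stake (length w) x = w}}) \<in> sets S"
      by (rule sets.countable_INT') (use B in auto)
  qed
  finally show ?thesis .
qed

lemma good_compl: "{\<omega>. \<not> good \<omega>} \<in> sets S"
proof -
  have "{\<omega>. \<not> good \<omega>} = space S - {\<omega>. good \<omega>}" by auto
  thus ?thesis using sets.Diff[OF sets.top good_set] by simp
qed

lemma S_top: "UNIV \<in> sets S" using sets.top[of S] by simp

lemma ret_iff:
  assumes "good \<omega>"
  shows "ret \<omega> = m \<longleftrightarrow> (1 \<le> m \<and> rw_pos G m \<omega> \<in> H \<and> (\<forall>k. 1 \<le> k \<longrightarrow> k < m \<longrightarrow> rw_pos G k \<omega> \<notin> H))"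
proof
  assume "ret \<omega> = m" thus "1 \<le> m \<and> rw_pos G m \<omega> \<in> H \<and> (\<forall>k. 1 \<le> k \<longrightarrow> k < m \<longrightarrow> rw_pos G k \<omega> \<notin> H)"
    using ret_props[OF assms] by auto
next
  assume a: "1 \<le> m \<and> rw_pos G m \<omega> \<in> H \<and> (\<forall>k. 1 \<le> k \<longrightarrow> k < m \<longrightarrow> rw_pos G k \<omega> \<notin> H)"
  show "ret \<omega> = m" unfolding ret_def
  proof (rule Least_equality)
    show "1 \<le> m \<and> rw_pos G m \<omega> \<in> H" using a by auto
    fix j assume "1 \<le> j \<and> rw_pos G j \<omega> \<in> H"
    thus "m \<le> j" using a by (meson not_le)
  qed
qed

lemma ret_event: "{\<omega>. good \<omega> \<and> P (ret \<omega>) (stake (ret \<omega>) \<omega>)} \<in> sets S"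
proof -
  define Q where "Q m v \<longleftrightarrow> 1 \<le> m \<and> prodl (take m v) \<in> H \<and> (\<forall>k. 1 \<le> k \<longrightarrow> k < m \<longrightarrow> prodl (take k v) \<notin> H) \<and> P m v" for m v
  have "{\<omega>. good \<omega> \<and> P (ret \<omega>) (stake (ret \<omega>) \<omega>)} = (\<Union>m. {\<omega>. good \<omega>} \<inter> (streams C \<inter> {\<omega>. Q m (stake m \<omega>)}))"
  proof (intro equalityI subsetI)
    fix \<omega> assume "\<omega> \<in> {\<omega>. good \<omega> \<and> P (ret \<omega>) (stake (ret \<omega>) \<omega>)}"
    hence g: "good \<omega>" "P (ret \<omega>) (stake (ret \<omega>) \<omega>)" by auto
    have "Q (ret \<omega>) (stake (ret \<omega>) \<omega>)"
      using ret_props[OF g(1)] g(2) by (auto simp: Q_def take_stake rw_stake min_def)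
    thus "\<omega> \<in> (\<Union>m. {\<omega>. good \<omega>} \<inter> (streams C \<inter> {\<omega>. Q m (stake m \<omega>)}))"
      using g good_streams by blast
  next
    fix \<omega> assume "\<omega> \<in> (\<Union>m. {\<omega>. good \<omega>} \<inter> (streams C \<inter> {\<omega>. Q m (stake m \<omega>)}))"
    then obtain m where m: "good \<omega>" "Q m (stake m \<omega>)" by blast
    have "ret \<omega> = m"
      using m(2) by (subst ret_iff[OF m(1)]) (auto simp: Q_def take_stake rw_stake min_def)
    thus "\<omega> \<in> {\<omega>. good \<omega> \<and> P (ret \<omega>) (stake (ret \<omega>) \<omega>)}" using m by (auto simp: Q_def)
  qed
  also have "\<dots> \<in> sets S"
  proof (rule sets.countable_UN, rule image_subsetI)
    fix m show "{\<omega>. good \<omega>} \<inter> (streams C \<inter> {\<omega>. Q m (stake m \<omega>)}) \<in> sets S"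
      by (intro sets.Int good_set L_st)
  qed
  finally show ?thesis .
qed

lemma ret_eq_set: "{\<omega>. good \<omega> \<and> ret \<omega> = m} \<in> sets S"
  using ret_event[of "\<lambda>r v. r = m"] by simp

lemma F_meas: "F \<in> measurable S (count_space UNIV)"
proof (rule measurableI)
  fix A :: "'a set"
  have "F -` A \<inter> space S = ({\<omega>. \<not> good \<omega>} \<inter> {\<omega>. \<one> \<in> A}) \<union> {\<omega>. good \<omega> \<and> (\<lambda>m v. prodl v \<in> A) (ret \<omega>) (stake (ret \<omega>) \<omega>)}"
    by (auto simp: F_def rw_stake split: if_splits)
  also have "\<dots> \<in> sets S"
    by (intro sets.Un sets.Int good_compl ret_event) (cases "\<one> \<in> A", auto intro: S_top)
  finally show "F -` A \<inter> space S \<in> sets S" .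
qed auto

lemma F_meas': "sets N = sets (count_space UNIV) \<Longrightarrow> F \<in> measurable S N"
  using F_meas measurable_cong_sets[of S S N "count_space UNIV"] by simp

lemma shift_meas: "shift \<in> measurable S S"
proof (rule measurableI)
  fix B assume B: "B \<in> sets S"
  have "shift -` B \<inter> space S = ({\<omega>. \<not> good \<omega>} \<inter> B) \<union> (\<Union>m. {\<omega>. good \<omega> \<and> (\<lambda>r v. r = m) (ret \<omega>) (stake (ret \<omega>) \<omega>)} \<inter> {\<omega>. sdrop m \<omega> \<in> B})"
    by (auto simp: shift_def split: if_splits)
  also have "\<dots> \<in> sets S"
    using B by (intro sets.Un sets.Int good_compl sets.countable_UN image_subsetI ret_eq_set sdrop_pre) auto
  finally show "shift -` B \<inter> space S \<in> sets S" .
qed auto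

lemma shift_pow_meas: "(shift ^^ k) \<in> measurable S S"
  by (induction k) (auto intro: measurable_compose[OF _ shift_meas])

lemma Phi_meas: "sets N = sets (count_space UNIV) \<Longrightarrow> Phi \<in> measurable S (stream_space N)"
proof (rule measurable_stream_space2)
  fix n assume N: "sets N = sets (count_space UNIV)"
  have "(\<lambda>x. Phi x !! n) = F \<circ> (shift ^^ n)" by (auto simp: Phi_def fun_eq_iff)
  thus "(\<lambda>x. Phi x !! n) \<in> measurable S N"
    using measurable_comp[OF shift_pow_meas F_meas'[OF N]] by simp
qed

definition DH :: "'a measure" where "DH = distr S (count_space UNIV) F"

lemma DH_prob: "prob_space DH" unfolding DH_def by (rule SP.prob_space_distr[OF F_meas])

lemma sets_DH[simp]: "sets DH = UNIV" by (simp add: DH_def)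

lemma emeasure_DH: "emeasure DH A = emeasure S {\<omega>. F \<omega> \<in> A}"
  unfolding DH_def by (subst emeasure_distr[OF F_meas]) (auto simp: vimage_def)

lemma H_countable: "countable H" using countable_subset[OF Hsub cntG] .

lemma DH_in: "DH \<in> {M :: 'a measure. prob_space M \<and> sets M = UNIV \<and> (AE x in M. measure M {x} \<noteq> 0)}"
proof -
  interpret DP: prob_space DH by (rule DH_prob)
  define Z where "Z = {x\<in>H. measure DH {x} = 0}"
  have "emeasure DH (- H) = 0" by (simp add: emeasure_DH F_in_H)
  moreover have "emeasure DH Z = 0"
  proof -
    have "countable Z" using H_countable by (rule countable_subset[rotated]) (auto simp: Z_def)
    hence "emeasure DH Z = (\<integral>\<^sup>+x. emeasure DH {x} \<partial>count_space Z)"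
      by (intro emeasure_countable_singleton) auto
    also have "\<dots> = 0" by (auto simp: Z_def DP.emeasure_eq_measure intro!: nn_integral_zero')
    finally show ?thesis .
  qed
  ultimately have "- H \<union> Z \<in> null_sets DH" by (auto intro!: null_sets.Un)
  hence "AE x in DH. measure DH {x} \<noteq> 0"
    by (rule AE_I') (auto simp: Z_def)
  thus ?thesis using DH_prob by simp
qed

definition muH :: "'a pmf" where "muH = Abs_pmf DH"

lemma measure_pmf_muH: "measure_pmf muH = DH"
  unfolding muH_def by (rule Abs_pmf_inverse[OF DH_in])

lemma pmf_muH: "pmf muH x = measure S {\<omega>. F \<omega> = x}"
  by (simp add: pmf.rep_eq measure_pmf_muH DH_def measure_distr[OF F_meas] vimage_def)

lemma emeasure_muH: "ennreal (pmf muH x) = emeasure S {\<omega>. F \<omega> = x}"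
proof -
  interpret DP: prob_space DH by (rule DH_prob)
  show ?thesis using DP.emeasure_eq_measure[of "{x}"] emeasure_DH[of "{x}"]
    by (simp add: pmf.rep_eq measure_pmf_muH)
qed

lemma set_pmf_muH: "set_pmf muH \<subseteq> H"
proof
  fix x assume "x \<in> set_pmf muH"
  hence "pmf muH x \<noteq> 0" by (simp add: set_pmf_iff)
  have "{\<omega>. F \<omega> = x} \<noteq> {}"
  proof
    assume "{\<omega>. F \<omega> = x} = {}"
    hence "pmf muH x = 0" by (simp add: pmf_muH)
    with \<open>pmf muH x \<noteq> 0\<close> show False by simp
  qed
  thus "x \<in> H" using F_in_H by auto
qed

definition Q :: "'a \<Rightarrow> ennreal" where
  "Q x = (\<integral>\<^sup>+w. ennreal (prod_list (map (pmf \<mu>) w)) \<partial>count_space {w\<in>R. prodl w = x})"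

lemma SM_good:
  assumes B: "B \<in> sets S"
  shows "emeasure S {\<omega>. good \<omega> \<and> F \<omega> = x \<and> shift \<omega> \<in> B} = Q x * emeasure S B"
proof -
  let ?R = "{w\<in>R. prodl w = x}"
  let ?A = "\<lambda>w. {\<omega>. good \<omega>} \<inter> {\<omega>. stake (length w) \<omega> = w \<and> sdrop (length w) \<omega> \<in> B}"
  have cR: "countable ?R" using R_countable by (rule countable_subset[rotated]) auto
  have "{\<omega>. good \<omega> \<and> F \<omega> = x \<and> shift \<omega> \<in> B} = (\<Union>w\<in>?R. ?A w)"
    using E1 by blast
  hence "emeasure S {\<omega>. good \<omega> \<and> F \<omega> = x \<and> shift \<omega> \<in> B} = emeasure S (\<Union>w\<in>?R. ?A w)" by simp
  also have "\<dots> = (\<integral>\<^sup>+w. emeasure S (?A w) \<partial>count_space ?R)"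
  proof (rule emeasure_UN_countable[OF _ cR])
    show "\<And>w. w \<in> ?R \<Longrightarrow> ?A w \<in> sets S" using good_set pre_meas[OF B] by auto
    show "disjoint_family_on ?A ?R"
      unfolding disjoint_family_on_def using R_disjoint by blast
  qed
  also have "\<dots> = (\<integral>\<^sup>+w. ennreal (prod_list (map (pmf \<mu>) w)) * emeasure S B \<partial>count_space ?R)"
  proof (intro nn_integral_cong)
    fix w
    have "emeasure S (?A w) = emeasure S {\<omega>. stake (length w) \<omega> = w \<and> sdrop (length w) \<omega> \<in> B}"
      by (rule emeasure_eq_AE) (use AE_good good_set pre_meas[OF B] in auto)
    thus "emeasure S (?A w) = ennreal (prod_list (map (pmf \<mu>) w)) * emeasure S B"
      by (simp add: prefix_emeasure[OF B])
  qed
  also have "\<dots> = Q x * emeasure S B"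
    unfolding Q_def by (rule nn_integral_multc) simp
  finally show ?thesis .
qed

lemma SM_meas: "{\<omega>. good \<omega> \<and> F \<omega> = x \<and> shift \<omega> \<in> B} \<in> sets S" if "B \<in> sets S"
proof -
  have "{\<omega>. good \<omega> \<and> F \<omega> = x \<and> shift \<omega> \<in> B} = {\<omega>. good \<omega>} \<inter> (F -` {x} \<inter> space S) \<inter> (shift -` B \<inter> space S)"
    by auto
  also have "\<dots> \<in> sets S"
    using good_set measurable_sets[OF F_meas, of "{x}"] measurable_sets[OF shift_meas that] by auto
  finally show ?thesis .
qed

lemma SM:
  assumes B: "B \<in> sets S"
  shows "emeasure S {\<omega>. F \<omega> = x \<and> shift \<omega> \<in> B} = ennreal (pmf muH x) * emeasure S B"
proof -
  have FB: "{\<omega>. F \<omega> = x \<and> shift \<omega> \<in> B'} \<in> sets S" if B': "B' \<in> sets S" for B'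
  proof -
    have "{\<omega>. F \<omega> = x \<and> shift \<omega> \<in> B'} = (F -` {x} \<inter> space S) \<inter> (shift -` B' \<inter> space S)" by auto
    thus ?thesis using measurable_sets[OF F_meas, of "{x}"] measurable_sets[OF shift_meas B'] by auto
  qed
  have eq: "emeasure S {\<omega>. F \<omega> = x \<and> shift \<omega> \<in> B'} = emeasure S {\<omega>. good \<omega> \<and> F \<omega> = x \<and> shift \<omega> \<in> B'}"
    if B': "B' \<in> sets S" for B'
  proof (rule emeasure_eq_AE)
    show "AE \<omega> in S. (\<omega> \<in> {\<omega>. F \<omega> = x \<and> shift \<omega> \<in> B'}) = (\<omega> \<in> {\<omega>. good \<omega> \<and> F \<omega> = x \<and> shift \<omega> \<in> B'})"
      using AE_good by eventually_elim auto
  qed (use FB[OF B'] SM_meas[OF B'] in auto)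
  have U: "emeasure S UNIV = 1" using SP.emeasure_space_1 by simp
  have "ennreal (pmf muH x) = Q x"
    using SM_good[OF sets.top, of x] eq[OF sets.top] U by (simp add: emeasure_muH)
  thus ?thesis using SM_good[OF B] eq[OF B] by simp
qed

end

lemma prod_list_rev_real: "prod_list (rev (xs :: real list)) = prod_list xs"
  by (induction xs) (auto simp: mult.commute)

context rws begin

interpretation SP: prob_space S by (rule S_prob)

abbreviation "T \<equiv> stream_space (measure_pmf muH)"

lemma T_prob: "prob_space T"
  by (rule prob_space.prob_space_stream_space) (rule prob_space_measure_pmf)

lemma sets_T: "sets T = sets (stream_space (count_space UNIV))"
  by (rule sets_stream_space_cong) simp

lemma space_T[simp]: "space T = UNIV" by (simp add: space_stream_space)

lemma sstart_T: "sstart H xs \<in> sets T" using sets_sstart[of H xs] sets_T by simp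

lemma Phi_measT: "Phi \<in> measurable S T" by (rule Phi_meas) simp

lemma Phi_pre: "{\<omega>. Phi \<omega> \<in> A} \<in> sets S" if "A \<in> sets T"
  using measurable_sets[OF Phi_measT that] by (simp add: vimage_def)

lemma AE_T_streams: "AE x in T. x \<in> streams H"
proof -
  have "AE x in T. stream_all (\<lambda>x. x \<in> H) x"
    by (rule prob_space.AE_stream_all[OF prob_space_measure_pmf]) (use set_pmf_muH in \<open>auto simp: AE_measure_pmf_iff\<close>)
  thus ?thesis by (simp add: streams_iff_sset subset_eq)
qed

lemma PH: "xs \<in> lists H \<Longrightarrow> emeasure S {\<omega>. Phi \<omega> \<in> sstart H xs} = emeasure T (sstart H xs)"
proof (induction xs)
  case Nil
  interpret TP: prob_space T by (rule T_prob)
  have "{\<omega>. Phi \<omega> \<in> sstart H []} = space S" using Phi_streams by auto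
  moreover have "emeasure T (sstart H []) = 1"
    using TP.emeasure_eq_1_AE[OF sstart_T[of "[]"]] AE_T_streams by simp
  moreover have "emeasure S UNIV = 1" using SP.emeasure_space_1 by simp
  ultimately show ?case by simp
next
  case (Cons x xs)
  hence x: "x \<in> H" and xs: "xs \<in> lists H" by auto
  have "{\<omega>. Phi \<omega> \<in> sstart H (x # xs)} = {\<omega>. F \<omega> = x \<and> shift \<omega> \<in> {\<omega>. Phi \<omega> \<in> sstart H xs}}"
    by (subst Phi_unfold) simp
  hence "emeasure S {\<omega>. Phi \<omega> \<in> sstart H (x # xs)} = ennreal (pmf muH x) * emeasure S {\<omega>. Phi \<omega> \<in> sstart H xs}"
    using SM[OF Phi_pre[OF sstart_T[of xs]], of x] by simp
  also have "\<dots> = ennreal (pmf muH x) * emeasure T (sstart H xs)" using Cons.IH[OF xs] by simp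
  also have "\<dots> = emeasure T (sstart H (x # xs))"
  proof -
    have "emeasure T (sstart H (x # xs)) = (\<integral>\<^sup>+t. emeasure T {y\<in>space T. t ## y \<in> sstart H (x # xs)} \<partial>measure_pmf muH)"
      by (rule prob_space.emeasure_stream_space[OF prob_space_measure_pmf]) (use sstart_T in simp)
    also have "\<dots> = (\<integral>\<^sup>+t. emeasure T (sstart H xs) * indicator {x} t \<partial>measure_pmf muH)"
    proof (intro nn_integral_cong)
      fix t
      show "emeasure T {y\<in>space T. t ## y \<in> sstart H (x # xs)} = emeasure T (sstart H xs) * indicator {x} t"
      proof (cases "t = x")
        case True
        have "{y\<in>space T. t ## y \<in> sstart H (x # xs)} = sstart H xs" using True by auto
        thus ?thesis using True by simp
      next
        case False
        have "{y\<in>space T. t ## y \<in> sstart H (x # xs)} = {}" using False by auto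
        thus ?thesis using False by simp
      qed
    qed
    also have "\<dots> = emeasure T (sstart H xs) * pmf muH x"
      by (simp add: nn_integral_cmult_indicator emeasure_pmf_single)
    finally show ?thesis by (simp add: mult.commute)
  qed
  finally show ?case .
qed

lemma Phi_distr: "distr S T Phi = T"
proof (rule stream_space_eq_sstart[OF H_countable])
  show "prob_space (distr S T Phi)" by (rule SP.prob_space_distr[OF Phi_measT])
  show "prob_space T" by (rule T_prob)
  show "AE x in distr S T Phi. x \<in> streams H"
  proof (subst AE_distr_iff[OF Phi_measT])
    show "{x \<in> space T. x \<in> streams H} \<in> sets T"
      using streams_sets[of H "measure_pmf muH"] by simp
    show "AE x in S. Phi x \<in> streams H" using Phi_streams by simp
  qed
  show "AE x in T. x \<in> streams H" by (rule AE_T_streams)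
  show "sets (distr S T Phi) = sets (stream_space (count_space UNIV))" using sets_T by simp
  show "sets T = sets (stream_space (count_space UNIV))" by (rule sets_T)
  fix xs :: "'a list" assume "xs \<noteq> []" "xs \<in> lists H"
  thus "emeasure (distr S T Phi) (sstart H xs) = emeasure T (sstart H xs)"
    using PH[of xs] by (subst emeasure_distr[OF Phi_measT sstart_T]) (simp add: vimage_def)
qed

lemma AR_transfer:
  assumes "alg_recurrent (G\<lparr>carrier := H\<rparr>) muH"
  shows "alg_recurrent G \<mu>"
  unfolding alg_recurrent_def
proof
  fix n
  have A: "AE \<eta> in T. tail_semigroup (G\<lparr>carrier := H\<rparr>) n \<eta> = H"
    using assms unfolding alg_recurrent_def by auto
  have B: "AE \<eta> in distr S T Phi. tail_semigroup (G\<lparr>carrier := H\<rparr>) n \<eta> = H"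
    unfolding Phi_distr by (rule A)
  have C: "AE \<omega> in S. tail_semigroup (G\<lparr>carrier := H\<rparr>) n (Phi \<omega>) = H"
    by (rule AE_distrD[OF Phi_measT B])
  show "AE \<omega> in S. tail_semigroup G n \<omega> = carrier G"
    using AE_good C by eventually_elim (rule T2)
qed

lemma pmf_Q: "ennreal (pmf muH x) = Q x"
proof -
  have "ennreal (pmf muH x) = emeasure S {\<omega>. F \<omega> = x}" by (rule emeasure_muH)
  also have "\<dots> = emeasure S {\<omega>. good \<omega> \<and> F \<omega> = x \<and> shift \<omega> \<in> UNIV}"
  proof (rule emeasure_eq_AE)
    show "AE \<omega> in S. (\<omega> \<in> {\<omega>. F \<omega> = x}) = (\<omega> \<in> {\<omega>. good \<omega> \<and> F \<omega> = x \<and> shift \<omega> \<in> UNIV})"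
      using AE_good by eventually_elim auto
    show "{\<omega>. F \<omega> = x} \<in> sets S" using measurable_sets[OF F_meas, of "{x}"] by (simp add: vimage_def)
    show "{\<omega>. good \<omega> \<and> F \<omega> = x \<and> shift \<omega> \<in> UNIV} \<in> sets S" by (rule SM_meas[OF S_top])
  qed
  also have "\<dots> = Q x" using SM_good[OF S_top, of x] SP.emeasure_space_1 by simp
  finally show ?thesis .
qed

definition rho :: "'a list \<Rightarrow> 'a list" where "rho w = rev (map (\<lambda>x. inv x) w)"

lemma prodl_rho: "set w \<subseteq> carrier G \<Longrightarrow> prodl (rho w) = inv (prodl w)"
proof (induction w)
  case Nil thus ?case by (simp add: rho_def)
next
  case (Cons a w)
  hence a: "a \<in> carrier G" and w: "set w \<subseteq> carrier G" by auto
  have "prodl (rho (a # w)) = prodl (rho w) \<otimes> prodl [inv a]"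
    unfolding rho_def using a w by (simp add: prodl_append subset_eq)
  also have "\<dots> = inv (prodl w) \<otimes> inv a" using Cons.IH[OF w] a by simp
  also have "\<dots> = inv (a \<otimes> prodl w)" using a w by (simp add: inv_mult_group)
  finally show ?case by simp
qed

lemma rho_lists: "w \<in> lists C \<Longrightarrow> rho w \<in> lists C"
  by (auto simp: rho_def inv_C)

lemma rho_rho: "set w \<subseteq> carrier G \<Longrightarrow> rho (rho w) = w"
proof -
  assume "set w \<subseteq> carrier G"
  hence "map (\<lambda>x. inv x) (map (\<lambda>x. inv x) w) = w" by (induction w) auto
  thus ?thesis by (simp add: rho_def rev_map[symmetric])
qed

lemma prodl_take_drop: "set w \<subseteq> carrier G \<Longrightarrow> prodl w = prodl (take j w) \<otimes> prodl (drop j w)"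
  by (metis append_take_drop_id prodl_append set_take_subset set_drop_subset order_trans)

lemma rho_R: assumes w: "w \<in> R" shows "rho w \<in> R"
proof -
  have wC: "w \<in> lists C" and ne: "w \<noteq> []" and pH: "prodl w \<in> H"
    and pre: "\<And>k. 1 \<le> k \<Longrightarrow> k < length w \<Longrightarrow> prodl (take k w) \<notin> H" using w by (auto simp: R_def)
  have wc: "set w \<subseteq> carrier G" using wC by (rule lists_C_carr)
  have "rho w \<in> lists C" using wC by (rule rho_lists)
  moreover have "rho w \<noteq> []" using ne by (simp add: rho_def)
  moreover have "prodl (rho w) \<in> H" using prodl_rho[OF wc] pH subgroup.m_inv_closed[OF sub] by simp
  moreover have "prodl (take k (rho w)) \<notin> H" if k: "1 \<le> k" "k < length (rho w)" for k
  proof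
    assume a: "prodl (take k (rho w)) \<in> H"
    define j where "j = length w - k"
    have kl: "k < length w" using k by (simp add: rho_def)
    have "take k (rho w) = rho (drop j w)"
      by (simp add: rho_def j_def take_rev drop_map)
    hence "inv (prodl (drop j w)) \<in> H"
      using a prodl_rho[of "drop j w"] wc by (metis set_drop_subset order_trans)
    hence d: "prodl (drop j w) \<in> H"
      using subgroup.m_inv_closed[OF sub] wc by (metis inv_inv prodl_closed set_drop_subset order_trans)
    have "prodl (take j w) = prodl w \<otimes> inv (prodl (drop j w))"
      using prodl_take_drop[OF wc, of j] wc
      by (simp add: m_assoc set_drop_subset set_take_subset order_trans[OF _ wc])
    hence "prodl (take j w) \<in> H"
      using d pH subgroup.m_closed[OF sub] subgroup.m_inv_closed[OF sub] by simp
    moreover have "1 \<le> j" "j < length w" using k kl by (auto simp: j_def)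
    ultimately show False using pre by blast
  qed
  ultimately show ?thesis by (auto simp: R_def)
qed

lemma prod_rho: "w \<in> lists C \<Longrightarrow> prod_list (map (pmf \<mu>) (rho w)) = prod_list (map (pmf \<mu>) w)"
proof -
  assume w: "w \<in> lists C"
  have "prod_list (map (pmf \<mu>) (rho w)) = prod_list (rev (map (\<lambda>x. pmf \<mu> (inv x)) w))"
    by (simp add: rho_def rev_map comp_def)
  also have "\<dots> = prod_list (map (\<lambda>x. pmf \<mu> (inv x)) w)" by (rule prod_list_rev_real)
  also have "map (\<lambda>x. pmf \<mu> (inv x)) w = map (pmf \<mu>) w"
  proof (rule map_cong)
    fix x assume "x \<in> set w"
    hence "x \<in> carrier G" using w C_carr by auto
    thus "pmf \<mu> (inv x) = pmf \<mu> x" using sym[of x] by simp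
  qed simp
  finally show ?thesis .
qed

lemma Q_sym: assumes g: "g \<in> H" shows "Q (inv g) = Q g"
proof -
  have gc: "g \<in> carrier G" using g Hsub by auto
  have bij: "bij_betw rho {w\<in>R. prodl w = g} {w\<in>R. prodl w = inv g}"
  proof (rule bij_betwI[where g = rho])
    have wc: "set w \<subseteq> carrier G" if "w \<in> R" for w
      using that lists_C_carr[of w] by (simp add: R_def)
    show "rho \<in> {w\<in>R. prodl w = g} \<rightarrow> {w\<in>R. prodl w = inv g}"
      using rho_R prodl_rho wc by auto
    show "rho \<in> {w\<in>R. prodl w = inv g} \<rightarrow> {w\<in>R. prodl w = g}"
      using rho_R prodl_rho wc gc by auto
    show "rho (rho x) = x" if "x \<in> {w\<in>R. prodl w = g}" for x using that wc rho_rho by auto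
    show "rho (rho y) = y" if "y \<in> {w\<in>R. prodl w = inv g}" for y using that wc rho_rho by auto
  qed
  have "Q (inv g) = (\<integral>\<^sup>+w. ennreal (prod_list (map (pmf \<mu>) (rho w))) \<partial>count_space {w\<in>R. prodl w = g})"
    unfolding Q_def by (rule nn_integral_bij_count_space[OF bij, symmetric])
  also have "\<dots> = Q g"
    unfolding Q_def by (intro nn_integral_cong) (auto simp: prod_rho R_def)
  finally show ?thesis .
qed

lemma muH_sym: "symmetric_measure (G\<lparr>carrier := H\<rparr>) muH"
  unfolding symmetric_measure_def
proof
  fix g assume g: "g \<in> carrier (G\<lparr>carrier := H\<rparr>)"
  hence g': "g \<in> H" by simp
  have "ennreal (pmf muH g) = ennreal (pmf muH (inv g))" using Q_sym[OF g'] by (simp add: pmf_Q)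
  hence "pmf muH g = pmf muH (inv g)" by simp
  thus "pmf muH g = pmf muH (inv\<^bsub>G\<lparr>carrier := H\<rparr>\<^esub> g)" using g' sub by simp
qed

lemma muH_on: "measure_on (G\<lparr>carrier := H\<rparr>) muH"
  using set_pmf_muH by (simp add: measure_on_def)

lemma R_in_set: assumes w: "w \<in> R" shows "prodl w \<in> set_pmf muH"
proof -
  have "{\<omega>. good \<omega>} \<inter> {\<omega>. stake (length w) \<omega> = w} \<subseteq> {\<omega>. F \<omega> = prodl w}"
    using E1[of _ "prodl w" UNIV] w by auto
  hence "emeasure S ({\<omega>. good \<omega>} \<inter> {\<omega>. stake (length w) \<omega> = w}) \<le> emeasure S {\<omega>. F \<omega> = prodl w}"
    by (rule emeasure_mono) (use measurable_sets[OF F_meas, of "{prodl w}"] in \<open>simp add: vimage_def\<close>)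
  moreover have "emeasure S ({\<omega>. good \<omega>} \<inter> {\<omega>. stake (length w) \<omega> = w}) = emeasure S {\<omega>. stake (length w) \<omega> = w}"
    by (rule emeasure_eq_AE) (use AE_good good_set stake_set in auto)
  moreover have "emeasure S {\<omega>. stake (length w) \<omega> = w} = ennreal (prod_list (map (pmf \<mu>) w))"
    using prefix_emeasure[OF S_top, of w] SP.emeasure_space_1 by simp
  moreover have "0 < prod_list (map (pmf \<mu>) w)" using w by (intro prod_list_pmf_pos) (auto simp: R_def)
  ultimately have le: "ennreal (prod_list (map (pmf \<mu>) w)) \<le> ennreal (pmf muH (prodl w))"
    and pos: "0 < prod_list (map (pmf \<mu>) w)" by (simp_all add: emeasure_muH)
  have "0 < ennreal (prod_list (map (pmf \<mu>) w))" using pos by simp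
  hence "0 < ennreal (pmf muH (prodl w))" using le by (rule less_le_trans)
  hence "pmf muH (prodl w) \<noteq> 0" by auto
  thus ?thesis by (simp add: set_pmf_iff)
qed

lemma genH: "v \<in> lists C \<Longrightarrow> prodl v \<in> H \<Longrightarrow> prodl v \<in> generate (G\<lparr>carrier := H\<rparr>) (prodl ` R)"
proof (induction "length v" arbitrary: v rule: less_induct)
  case less
  show ?case
  proof (cases "v = []")
    case True
    thus ?thesis using generate.one[of "G\<lparr>carrier := H\<rparr>" "prodl ` R"] by simp
  next
    case False
    have vc: "set v \<subseteq> carrier G" using less.prems(1) by (rule lists_C_carr)
    define k where "k = (LEAST k. 1 \<le> k \<and> prodl (take k v) \<in> H)"
    have ex: "1 \<le> length v \<and> prodl (take (length v) v) \<in> H" using False less.prems by (cases v) auto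
    have "1 \<le> k \<and> prodl (take k v) \<in> H"
      unfolding k_def by (rule LeastI[of "\<lambda>k. 1 \<le> k \<and> prodl (take k v) \<in> H", OF ex])
    hence k: "1 \<le> k" "prodl (take k v) \<in> H" by auto
    have kle: "k \<le> length v" unfolding k_def by (rule Least_le[of "\<lambda>k. 1 \<le> k \<and> prodl (take k v) \<in> H", OF ex])
    have kmin: "\<And>j. 1 \<le> j \<Longrightarrow> j < k \<Longrightarrow> prodl (take j v) \<notin> H"
      unfolding k_def using not_less_Least by blast
    define w where "w = take k v"
    have wR: "w \<in> R"
      unfolding R_def w_def using k kle kmin less.prems(1) False
      by (auto simp: min_def dest: in_set_takeD)
    have "prodl v = prodl w \<otimes> prodl (drop k v)" using prodl_take_drop[OF vc] by (simp add: w_def)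
    moreover have dc: "prodl (drop k v) \<in> carrier G" using vc by (meson prodl_closed set_drop_subset order_trans)
    moreover have wc: "prodl w \<in> carrier G" using vc by (simp add: w_def set_take_subset order_trans[OF _ vc])
    ultimately have "prodl (drop k v) = inv (prodl w) \<otimes> prodl v"
      by (simp add: m_assoc[symmetric])
    hence dH: "prodl (drop k v) \<in> H"
      using k(2) less.prems(2) subgroup.m_closed[OF sub] subgroup.m_inv_closed[OF sub] by (simp add: w_def)
    have g2: "prodl (drop k v) \<in> generate (G\<lparr>carrier := H\<rparr>) (prodl ` R)"
      using less.hyps[of "drop k v"] k(1) False dH less.prems(1) set_drop_subset[of k v] by (simp add: lists_eq_set)
    have g1: "prodl w \<in> generate (G\<lparr>carrier := H\<rparr>) (prodl ` R)" using wR by (auto intro: generate.incl)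
    from g1 g2 have "prodl w \<otimes>\<^bsub>G\<lparr>carrier := H\<rparr>\<^esub> prodl (drop k v) \<in> generate (G\<lparr>carrier := H\<rparr>) (prodl ` R)"
      by (rule generate.eng)
    thus ?thesis using prodl_take_drop[OF vc, of k] by (simp add: w_def)
  qed
qed

lemma muH_nd: "non_degenerate (G\<lparr>carrier := H\<rparr>) muH"
  unfolding non_degenerate_def
proof
  interpret GH: group "G\<lparr>carrier := H\<rparr>" by (rule subgroup_imp_group[OF sub])
  show "generate (G\<lparr>carrier := H\<rparr>) (set_pmf muH) \<subseteq> carrier (G\<lparr>carrier := H\<rparr>)"
    using GH.generate_in_carrier set_pmf_muH by auto
  show "carrier (G\<lparr>carrier := H\<rparr>) \<subseteq> generate (G\<lparr>carrier := H\<rparr>) (set_pmf muH)"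
  proof
    fix h assume "h \<in> carrier (G\<lparr>carrier := H\<rparr>)"
    hence h: "h \<in> H" by simp
    obtain v where v: "v \<in> lists C" "prodl v = h" using word_exists[of h] h Hsub by auto
    have "h \<in> generate (G\<lparr>carrier := H\<rparr>) (prodl ` R)" using genH[OF v(1)] v h by simp
    moreover have "generate (G\<lparr>carrier := H\<rparr>) (prodl ` R) \<subseteq> generate (G\<lparr>carrier := H\<rparr>) (set_pmf muH)"
      by (rule GH.mono_generate) (use R_in_set in auto)
    ultimately show "h \<in> generate (G\<lparr>carrier := H\<rparr>) (set_pmf muH)" by auto
  qed
qed

end

context rws begin

interpretation SP: prob_space S by (rule S_prob)

lemma cons_meas: "(\<lambda>\<omega>. s ## \<omega>) \<in> measurable S S"
  by (rule measurable_Stream) auto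

lemma decomp:
  fixes \<psi> :: "'a stream \<Rightarrow> real"
  assumes m: "\<psi> \<in> borel_measurable S" and b: "\<And>\<omega>. \<bar>\<psi> \<omega>\<bar> \<le> B"
  shows "integral\<^sup>L S \<psi> = (\<integral>s. (\<integral>\<omega>. \<psi> (s ## \<omega>) \<partial>S) \<partial>M)"
proof -
  have B0: "0 \<le> B" using b[of undefined] by linarith
  have ms: "(\<lambda>\<omega>. \<psi> (s ## \<omega>)) \<in> borel_measurable S" for s
    by (rule measurable_compose[OF cons_meas m])
  have lb: "- B \<le> \<psi> \<omega>" for \<omega> using b[of \<omega>] by (simp add: abs_le_iff)
  have ub: "\<psi> \<omega> \<le> B" for \<omega> using b[of \<omega>] by (simp add: abs_le_iff)
  have nn1: "0 \<le> \<psi> \<omega> + B" for \<omega> using lb[of \<omega>] by linarith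
  have nn2: "0 \<le> B + \<psi> \<omega>" for \<omega> using lb[of \<omega>] by linarith
  have int: "integrable S \<psi>" by (rule SP.integrable_const_bound[where B=B]) (use b m in auto)
  have intS: "integrable S (\<lambda>\<omega>. \<psi> (s ## \<omega>))" for s
    by (rule SP.integrable_const_bound[where B=B]) (use b ms in auto)
  define I where "I s = (\<integral>\<omega>. \<psi> (s ## \<omega>) \<partial>S)" for s
  have Ib: "\<bar>I s\<bar> \<le> B" for s
  proof -
    have "I s \<le> (\<integral>\<omega>. B \<partial>S)" unfolding I_def
      by (rule integral_mono[OF intS]) (use ub in auto)
    moreover have "(\<integral>\<omega>. - B \<partial>S) \<le> I s" unfolding I_def
      by (rule integral_mono[OF _ intS]) (use lb in auto)
    ultimately show ?thesis using SP.prob_space by (auto simp: abs_le_iff)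
  qed
  have intM: "integrable M I"
    by (rule measure_pmf.integrable_const_bound[where B=B]) (use Ib in auto)
  have "(\<integral>\<^sup>+\<omega>. ennreal (\<psi> \<omega> + B) \<partial>S) = (\<integral>\<^sup>+s. (\<integral>\<^sup>+\<omega>. ennreal (\<psi> (s ## \<omega>) + B) \<partial>S) \<partial>M)"
    by (rule prob_space.nn_integral_stream_space[OF prob_space_measure_pmf]) (use m in measurable)
  also have "\<dots> = (\<integral>\<^sup>+s. ennreal (I s + B) \<partial>M)"
  proof (intro nn_integral_cong)
    fix s
    have "(\<integral>\<^sup>+\<omega>. ennreal (\<psi> (s ## \<omega>) + B) \<partial>S) = ennreal (\<integral>\<omega>. \<psi> (s ## \<omega>) + B \<partial>S)"
      by (rule nn_integral_eq_integral) (use intS nn1 nn2 in auto)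
    also have "(\<integral>\<omega>. \<psi> (s ## \<omega>) + B \<partial>S) = I s + B"
      using intS[of s] SP.prob_space by (simp add: I_def)
    finally show "(\<integral>\<^sup>+\<omega>. ennreal (\<psi> (s ## \<omega>) + B) \<partial>S) = ennreal (I s + B)" .
  qed
  also have "\<dots> = ennreal (\<integral>s. I s + B \<partial>M)"
  proof (rule nn_integral_eq_integral)
    show "integrable M (\<lambda>s. I s + B)" using intM by simp
    have "0 \<le> I s + B" for s using Ib[of s] by linarith
    thus "AE s in M. 0 \<le> I s + B" by simp
  qed
  also have "(\<integral>s. I s + B \<partial>M) = (\<integral>s. I s \<partial>M) + B"
    using intM by simp
  finally have e1: "(\<integral>\<^sup>+\<omega>. ennreal (\<psi> \<omega> + B) \<partial>S) = ennreal ((\<integral>s. I s \<partial>M) + B)" .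
  have "(\<integral>\<^sup>+\<omega>. ennreal (\<psi> \<omega> + B) \<partial>S) = ennreal (\<integral>\<omega>. \<psi> \<omega> + B \<partial>S)"
    by (rule nn_integral_eq_integral) (use int nn1 nn2 in auto)
  also have "(\<integral>\<omega>. \<psi> \<omega> + B \<partial>S) = integral\<^sup>L S \<psi> + B"
    using int SP.prob_space by simp
  finally have e2: "(\<integral>\<^sup>+\<omega>. ennreal (\<psi> \<omega> + B) \<partial>S) = ennreal (integral\<^sup>L S \<psi> + B)" .
  have n1: "0 \<le> integral\<^sup>L S \<psi> + B"
  proof -
    have "(\<integral>\<omega>. - B \<partial>S) \<le> integral\<^sup>L S \<psi>"
      by (rule integral_mono[OF _ int]) (use lb in auto)
    thus ?thesis using SP.prob_space by simp
  qed
  have n2: "0 \<le> (\<integral>s. I s \<partial>M) + B"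
  proof -
    have "(\<integral>s. - B \<partial>M) \<le> (\<integral>s. I s \<partial>M)"
    proof (rule integral_mono[OF _ intM])
      fix s show "- B \<le> I s" using Ib[of s] by linarith
    qed simp
    thus ?thesis by simp
  qed
  from e1 e2 n1 n2 have "integral\<^sup>L S \<psi> + B = (\<integral>s. I s \<partial>M) + B" by simp
  thus ?thesis by (simp add: I_def)
qed

definition sig :: "'a \<Rightarrow> 'a stream \<Rightarrow> nat" where
  "sig g \<omega> = (LEAST m. g \<otimes> rw_pos G m \<omega> \<in> H)"

definition hit :: "'a \<Rightarrow> 'a stream \<Rightarrow> 'a" where
  "hit g \<omega> = (if good \<omega> \<and> g \<in> carrier G then g \<otimes> rw_pos G (sig g \<omega>) \<omega> else \<one>)"

lemma sig_ex: "good \<omega> \<Longrightarrow> g \<in> carrier G \<Longrightarrow> \<exists>m. g \<otimes> rw_pos G m \<omega> \<in> H"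
  using visit[of \<omega> g \<one> 0] coset_mult_one[OF Hsub] by auto

lemma sig_props:
  assumes "good \<omega>" "g \<in> carrier G"
  shows "g \<otimes> rw_pos G (sig g \<omega>) \<omega> \<in> H" "\<And>k. k < sig g \<omega> \<Longrightarrow> g \<otimes> rw_pos G k \<omega> \<notin> H"
proof -
  obtain m where "g \<otimes> rw_pos G m \<omega> \<in> H" using sig_ex[OF assms] by blast
  thus "g \<otimes> rw_pos G (sig g \<omega>) \<omega> \<in> H" unfolding sig_def by (rule LeastI)
  fix k assume "k < sig g \<omega>" thus "g \<otimes> rw_pos G k \<omega> \<notin> H" unfolding sig_def by (rule not_less_Least)
qed

lemma sig_iff:
  assumes "good \<omega>" "g \<in> carrier G"
  shows "sig g \<omega> = m \<longleftrightarrow> (g \<otimes> rw_pos G m \<omega> \<in> H \<and> (\<forall>k<m. g \<otimes> rw_pos G k \<omega> \<notin> H))"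
proof
  assume "sig g \<omega> = m" thus "g \<otimes> rw_pos G m \<omega> \<in> H \<and> (\<forall>k<m. g \<otimes> rw_pos G k \<omega> \<notin> H)"
    using sig_props[OF assms] by auto
next
  assume a: "g \<otimes> rw_pos G m \<omega> \<in> H \<and> (\<forall>k<m. g \<otimes> rw_pos G k \<omega> \<notin> H)"
  show "sig g \<omega> = m" unfolding sig_def
  proof (rule Least_equality)
    show "g \<otimes> rw_pos G m \<omega> \<in> H" using a by auto
    fix j assume "g \<otimes> rw_pos G j \<omega> \<in> H" thus "m \<le> j" using a by (meson not_le)
  qed
qed

lemma hit_in_H: "hit g \<omega> \<in> H"
  using sig_props(1)[of \<omega> g] subgroup.one_closed[OF sub] by (auto simp: hit_def)

lemma hit_H: assumes "g \<in> H" "good \<omega>" shows "hit g \<omega> = g"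
proof -
  have gc: "g \<in> carrier G" using assms Hsub by auto
  have "sig g \<omega> = 0" using assms gc by (subst sig_iff) auto
  thus ?thesis using assms gc by (simp add: hit_def)
qed

lemma sig_event: "{\<omega>. good \<omega> \<and> g \<in> carrier G \<and> sig g \<omega> = m \<and> g \<otimes> rw_pos G m \<omega> \<in> A} \<in> sets S"
proof (cases "g \<in> carrier G")
  case False thus ?thesis by simp
next
  case True
  define P where "P v \<longleftrightarrow> g \<otimes> prodl v \<in> H \<and> (\<forall>k<m. g \<otimes> prodl (take k v) \<notin> H) \<and> g \<otimes> prodl v \<in> A" for v
  have "{\<omega>. good \<omega> \<and> g \<in> carrier G \<and> sig g \<omega> = m \<and> g \<otimes> rw_pos G m \<omega> \<in> A}
      = {\<omega>. good \<omega>} \<inter> (streams C \<inter> {\<omega>. P (stake m \<omega>)})"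
  proof (intro equalityI subsetI)
    fix \<omega> assume "\<omega> \<in> {\<omega>. good \<omega> \<and> g \<in> carrier G \<and> sig g \<omega> = m \<and> g \<otimes> rw_pos G m \<omega> \<in> A}"
    hence o: "good \<omega>" "sig g \<omega> = m" "g \<otimes> rw_pos G m \<omega> \<in> A" by auto
    have "g \<otimes> rw_pos G m \<omega> \<in> H \<and> (\<forall>k<m. g \<otimes> rw_pos G k \<omega> \<notin> H)"
      using sig_iff[OF o(1) True, of m] o(2) by blast
    hence "P (stake m \<omega>)" using o(3) by (simp add: P_def rw_stake take_stake min_def)
    thus "\<omega> \<in> {\<omega>. good \<omega>} \<inter> (streams C \<inter> {\<omega>. P (stake m \<omega>)})" using o(1) good_streams by auto
  next
    fix \<omega> assume "\<omega> \<in> {\<omega>. good \<omega>} \<inter> (streams C \<inter> {\<omega>. P (stake m \<omega>)})"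
    hence o: "good \<omega>" "P (stake m \<omega>)" by auto
    hence c: "g \<otimes> rw_pos G m \<omega> \<in> H \<and> (\<forall>k<m. g \<otimes> rw_pos G k \<omega> \<notin> H)" "g \<otimes> rw_pos G m \<omega> \<in> A"
      by (simp_all add: P_def rw_stake take_stake min_def)
    have "sig g \<omega> = m" using sig_iff[OF o(1) True] c(1) by simp
    thus "\<omega> \<in> {\<omega>. good \<omega> \<and> g \<in> carrier G \<and> sig g \<omega> = m \<and> g \<otimes> rw_pos G m \<omega> \<in> A}"
      using o(1) c(2) True by auto
  qed
  also have "\<dots> \<in> sets S" by (intro sets.Int good_set L_st)
  finally show ?thesis .
qed

lemma hit_meas: "hit g \<in> measurable S (count_space UNIV)"
proof (rule measurableI)
  fix A :: "'a set"
  have "hit g -` A \<inter> space S = ({\<omega>. \<not> (good \<omega> \<and> g \<in> carrier G)} \<inter> {\<omega>. \<one> \<in> A})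
      \<union> (\<Union>m. {\<omega>. good \<omega> \<and> g \<in> carrier G \<and> sig g \<omega> = m \<and> g \<otimes> rw_pos G m \<omega> \<in> A})"
    by (auto simp: hit_def split: if_splits)
  also have "\<dots> \<in> sets S"
  proof (intro sets.Un sets.Int sets.countable_UN image_subsetI sig_event)
    show "{\<omega>. \<not> (good \<omega> \<and> g \<in> carrier G)} \<in> sets S"
      using good_compl S_top by (cases "g \<in> carrier G") auto
    show "{\<omega>. \<one> \<in> A} \<in> sets S" using S_top by (cases "\<one> \<in> A") auto
  qed
  finally show "hit g -` A \<inter> space S \<in> sets S" .
qed auto

lemma good_cons: assumes "good \<omega>" "s \<in> C" shows "good (s ## \<omega>)"
  unfolding good_def
proof (intro conjI ballI allI)
  show "s ## \<omega> \<in> streams C" using assms good_streams by auto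
  fix w n assume "w \<in> lists C"
  then obtain p where "p \<ge> n" "stake (length w) (sdrop p \<omega>) = w" using assms(1) unfolding good_def by blast
  thus "\<exists>p\<ge>n. stake (length w) (sdrop p (s ## \<omega>)) = w" by (intro exI[of _ "Suc p"]) auto
qed

lemma hit_cons_notH:
  assumes g: "good \<omega>" and s: "s \<in> C" and gc: "g \<in> carrier G" and gH: "g \<notin> H"
  shows "hit g (s ## \<omega>) = hit (g \<otimes> s) \<omega>"
proof -
  have sc: "s \<in> carrier G" using s C_carr by auto
  have gs: "g \<otimes> s \<in> carrier G" using gc sc by simp
  have om: "\<omega> \<in> streams (carrier G)" using g by (rule good_carr)
  have g': "good (s ## \<omega>)" using good_cons[OF g s] .
  define m0 where "m0 = sig (g \<otimes> s) \<omega>"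
  have eq: "g \<otimes> rw_pos G (Suc k) (s ## \<omega>) = (g \<otimes> s) \<otimes> rw_pos G k \<omega>" for k
    using gc sc rw_closed[OF om] by (simp add: rw_Suc_Stream m_assoc)
  have "sig g (s ## \<omega>) = Suc m0"
  proof (subst sig_iff[OF g' gc], intro conjI allI impI)
    show "g \<otimes> rw_pos G (Suc m0) (s ## \<omega>) \<in> H" using sig_props(1)[OF g gs] by (simp add: eq m0_def)
    fix k assume "k < Suc m0"
    show "g \<otimes> rw_pos G k (s ## \<omega>) \<notin> H"
    proof (cases k)
      case 0 thus ?thesis using gH gc by simp
    next
      case (Suc k') thus ?thesis using sig_props(2)[OF g gs, of k'] \<open>k < Suc m0\<close> by (simp add: eq m0_def)
    qed
  qed
  thus ?thesis using g g' gc gs by (simp add: hit_def eq m0_def)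
qed

lemma F_cons_H:
  assumes g: "good \<omega>" and s: "s \<in> C" and gH: "g \<in> H"
  shows "g \<otimes> F (s ## \<omega>) = hit (g \<otimes> s) \<omega>"
proof -
  have gc: "g \<in> carrier G" using gH Hsub by auto
  have sc: "s \<in> carrier G" using s C_carr by auto
  have gs: "g \<otimes> s \<in> carrier G" using gc sc by simp
  have om: "\<omega> \<in> streams (carrier G)" using g by (rule good_carr)
  have g': "good (s ## \<omega>)" using good_cons[OF g s] .
  define m0 where "m0 = sig (g \<otimes> s) \<omega>"
  have eq: "g \<otimes> rw_pos G (Suc k) (s ## \<omega>) = (g \<otimes> s) \<otimes> rw_pos G k \<omega>" for k
    using gc sc rw_closed[OF om] by (simp add: rw_Suc_Stream m_assoc)
  have iffH: "rw_pos G k (s ## \<omega>) \<in> H \<longleftrightarrow> g \<otimes> rw_pos G k (s ## \<omega>) \<in> H" for k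
  proof
    assume "rw_pos G k (s ## \<omega>) \<in> H" thus "g \<otimes> rw_pos G k (s ## \<omega>) \<in> H"
      using gH subgroup.m_closed[OF sub] by simp
  next
    assume a: "g \<otimes> rw_pos G k (s ## \<omega>) \<in> H"
    have rc: "rw_pos G k (s ## \<omega>) \<in> carrier G" using rw_closed good_carr[OF g'] by simp
    have "inv g \<otimes> (g \<otimes> rw_pos G k (s ## \<omega>)) \<in> H"
      using a gH subgroup.m_closed[OF sub] subgroup.m_inv_closed[OF sub] by simp
    thus "rw_pos G k (s ## \<omega>) \<in> H" using gc rc by (simp add: m_assoc[symmetric])
  qed
  have "ret (s ## \<omega>) = Suc m0"
  proof (subst ret_iff[OF g'], intro conjI allI impI)
    show "1 \<le> Suc m0" by simp
    show "rw_pos G (Suc m0) (s ## \<omega>) \<in> H" using sig_props(1)[OF g gs] iffH by (simp add: eq m0_def)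
    fix k assume k: "1 \<le> k" "k < Suc m0"
    then obtain k' where k': "k = Suc k'" "k' < m0" by (cases k) auto
    show "rw_pos G k (s ## \<omega>) \<notin> H" using sig_props(2)[OF g gs, of k'] k' iffH by (simp add: eq m0_def)
  qed
  hence "g \<otimes> F (s ## \<omega>) = (g \<otimes> s) \<otimes> rw_pos G m0 \<omega>" using g' by (simp add: F_def eq)
  thus ?thesis using g gs by (simp add: hit_def m0_def)
qed

lemma liouville_transfer:
  assumes L: "liouville G \<mu>"
  shows "liouville (G\<lparr>carrier := H\<rparr>) muH"
  unfolding liouville_def
proof (intro allI impI)
  fix f :: "'a \<Rightarrow> real"
  assume a: "harmonic (G\<lparr>carrier := H\<rparr>) muH f \<and> (\<exists>B. \<forall>g\<in>carrier (G\<lparr>carrier := H\<rparr>). \<bar>f g\<bar> \<le> B)"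
  then obtain B where B: "\<And>g. g \<in> H \<Longrightarrow> \<bar>f g\<bar> \<le> B" by auto
  have harm: "\<And>g. g \<in> H \<Longrightarrow> f g = measure_pmf.expectation muH (\<lambda>h. f (g \<otimes> h))"
    using a by (simp add: harmonic_def)
  define Ft where "Ft g = (\<integral>\<omega>. f (hit g \<omega>) \<partial>S)" for g
  have fb: "\<bar>f (hit g \<omega>)\<bar> \<le> B" for g \<omega> using B hit_in_H by auto
  have flb: "- B \<le> f (hit g \<omega>)" for g \<omega> using fb[of g \<omega>] by (simp add: abs_le_iff)
  have fub: "f (hit g \<omega>) \<le> B" for g \<omega> using fb[of g \<omega>] by (simp add: abs_le_iff)
  have fm: "(\<lambda>\<omega>. f (hit g \<omega>)) \<in> borel_measurable S" for g
    by (rule measurable_compose[OF hit_meas]) simp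
  have fint: "integrable S (\<lambda>\<omega>. f (hit g \<omega>))" for g
    by (rule SP.integrable_const_bound[where B=B]) (use fb fm in auto)
  have Ftb: "\<bar>Ft g\<bar> \<le> B" for g
  proof -
    have "Ft g \<le> (\<integral>\<omega>. B \<partial>S)" unfolding Ft_def
      by (rule integral_mono[OF fint]) (use fub in auto)
    moreover have "(\<integral>\<omega>. - B \<partial>S) \<le> Ft g" unfolding Ft_def
      by (rule integral_mono[OF _ fint]) (use flb in auto)
    ultimately show ?thesis using SP.prob_space by (auto simp: abs_le_iff)
  qed
  have FtH: "Ft g = f g" if g: "g \<in> H" for g
  proof -
    have "Ft g = (\<integral>\<omega>. f g \<partial>S)" unfolding Ft_def
      by (rule integral_cong_AE[OF fm]) (use AE_good hit_H[OF g] in auto)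
    thus ?thesis using SP.prob_space by simp
  qed
  have exp_F: "measure_pmf.expectation muH (\<lambda>h. f (g \<otimes> h)) = (\<integral>\<omega>. f (g \<otimes> F \<omega>) \<partial>S)" for g
    unfolding measure_pmf_muH DH_def by (rule integral_distr[OF F_meas]) simp
  have "harmonic G \<mu> Ft"
    unfolding harmonic_def
  proof (intro ballI conjI)
    fix g assume gc: "g \<in> carrier G"
    show "integrable M (\<lambda>h. Ft (g \<otimes> h))"
      by (rule measure_pmf.integrable_const_bound[where B=B]) (use Ftb in auto)
    define \<psi> where "\<psi> \<omega> = (if g \<in> H then f (g \<otimes> F \<omega>) else f (hit g \<omega>))" for \<omega>
    have \<psi>b: "\<bar>\<psi> \<omega>\<bar> \<le> B" for \<omega>
      using fb B F_in_H subgroup.m_closed[OF sub] by (auto simp: \<psi>_def)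
    have \<psi>m: "\<psi> \<in> borel_measurable S"
    proof (cases "g \<in> H")
      case True
      have "(\<lambda>\<omega>. f (g \<otimes> F \<omega>)) \<in> borel_measurable S" by (rule measurable_compose[OF F_meas]) simp
      thus ?thesis using True unfolding \<psi>_def by simp
    next
      case False thus ?thesis using fm unfolding \<psi>_def by simp
    qed
    have "Ft g = integral\<^sup>L S \<psi>"
    proof (cases "g \<in> H")
      case True
      have "\<psi> = (\<lambda>\<omega>. f (g \<otimes> F \<omega>))" using True unfolding \<psi>_def by simp
      thus ?thesis using FtH[OF True] harm[OF True] exp_F[of g] by simp
    next
      case False
      have "\<psi> = (\<lambda>\<omega>. f (hit g \<omega>))" using False unfolding \<psi>_def by simp
      thus ?thesis by (simp add: Ft_def)
    qed
    also have "\<dots> = (\<integral>s. (\<integral>\<omega>. \<psi> (s ## \<omega>) \<partial>S) \<partial>M)" by (rule decomp[OF \<psi>m \<psi>b])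
    also have "\<dots> = (\<integral>s. Ft (g \<otimes> s) \<partial>M)"
    proof (rule integral_cong_AE)
      show "AE s in M. (\<integral>\<omega>. \<psi> (s ## \<omega>) \<partial>S) = Ft (g \<otimes> s)"
      proof (rule AE_measure_pmf_iff[THEN iffD2], intro ballI)
        fix s assume s: "s \<in> C"
        show "(\<integral>\<omega>. \<psi> (s ## \<omega>) \<partial>S) = Ft (g \<otimes> s)" unfolding Ft_def
        proof (rule integral_cong_AE)
          show "(\<lambda>\<omega>. \<psi> (s ## \<omega>)) \<in> borel_measurable S" by (rule measurable_compose[OF cons_meas \<psi>m])
          show "(\<lambda>\<omega>. f (hit (g \<otimes> s) \<omega>)) \<in> borel_measurable S" by (rule fm)
          show "AE \<omega> in S. \<psi> (s ## \<omega>) = f (hit (g \<otimes> s) \<omega>)"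
            using AE_good
          proof eventually_elim
            case (elim \<omega>)
            show ?case
            proof (cases "g \<in> H")
              case True thus ?thesis using F_cons_H[OF elim s True] by (simp add: \<psi>_def)
            next
              case False thus ?thesis using hit_cons_notH[OF elim s gc False] by (simp add: \<psi>_def)
            qed
          qed
        qed
      qed
    qed simp_all
    finally show "Ft g = measure_pmf.expectation \<mu> (\<lambda>h. Ft (g \<otimes> h))" .
  qed
  moreover have "\<exists>B. \<forall>g\<in>carrier G. \<bar>Ft g\<bar> \<le> B" using Ftb by blast
  ultimately have const: "\<forall>g\<in>carrier G. \<forall>h\<in>carrier G. Ft g = Ft h"
    using L unfolding liouville_def by blast
  show "\<forall>g\<in>carrier (G\<lparr>carrier := H\<rparr>). \<forall>h\<in>carrier (G\<lparr>carrier := H\<rparr>). f g = f h"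
  proof (intro ballI)
    fix g h assume "g \<in> carrier (G\<lparr>carrier := H\<rparr>)" "h \<in> carrier (G\<lparr>carrier := H\<rparr>)"
    hence gh: "g \<in> H" "h \<in> H" by auto
    thus "f g = f h" using const FtH Hsub by (metis subsetD)
  qed
qed

end
theorem mainTheorem10:
  fixes G :: "('a, 'b) monoid_scheme" and H :: "'a set"
  assumes "group G" and "countable (carrier G)"
    and "subgroup H G" and "finite (rcosets\<^bsub>G\<^esub> H)"
  shows "(AR_group (G\<lparr>carrier := H\<rparr>) \<longrightarrow> AR_group G)
       \<and> (liouville_AR_group (G\<lparr>carrier := H\<rparr>) \<longrightarrow> liouville_AR_group G)"
proof -
  have R: "rws G H \<mu>" if "measure_on G \<mu>" "symmetric_measure G \<mu>" "non_degenerate G \<mu>" for \<mu>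
  proof (intro rws.intro rws_axioms.intro)
    show "group G" by (rule assms(1))
    show "countable (carrier G)" by (rule assms(2))
    show "subgroup H G" by (rule assms(3))
    show "finite (rcosets\<^bsub>G\<^esub> H)" by (rule assms(4))
    show "set_pmf \<mu> \<subseteq> carrier G" using that(1) unfolding measure_on_def .
    show "\<And>g. g \<in> carrier G \<Longrightarrow> pmf \<mu> g = pmf \<mu> (inv\<^bsub>G\<^esub> g)"
      using that(2) unfolding symmetric_measure_def by blast
    show "generate G (set_pmf \<mu>) = carrier G" using that(3) unfolding non_degenerate_def .
  qed
  show ?thesis
  proof (intro conjI impI)
    assume AR: "AR_group (G\<lparr>carrier := H\<rparr>)"
    show "AR_group G" unfolding AR_group_def
    proof (intro allI impI)
      fix \<mu> assume c: "measure_on G \<mu> \<and> symmetric_measure G \<mu> \<and> non_degenerate G \<mu>"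
      have r: "rws G H \<mu>" using R c by simp
      interpret rws G H \<mu> by (rule r)
      have "measure_on (G\<lparr>carrier := H\<rparr>) muH \<and> symmetric_measure (G\<lparr>carrier := H\<rparr>) muH
          \<and> non_degenerate (G\<lparr>carrier := H\<rparr>) muH"
        using muH_on muH_sym muH_nd by simp
      moreover have "\<forall>\<nu>. measure_on (G\<lparr>carrier := H\<rparr>) \<nu> \<and> symmetric_measure (G\<lparr>carrier := H\<rparr>) \<nu>
          \<and> non_degenerate (G\<lparr>carrier := H\<rparr>) \<nu> \<longrightarrow> alg_recurrent (G\<lparr>carrier := H\<rparr>) \<nu>"
        using AR unfolding AR_group_def .
      ultimately have "alg_recurrent (G\<lparr>carrier := H\<rparr>) muH" by blast
      thus "alg_recurrent G \<mu>" by (rule AR_transfer)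
    qed
  next
    assume AR: "liouville_AR_group (G\<lparr>carrier := H\<rparr>)"
    show "liouville_AR_group G" unfolding liouville_AR_group_def
    proof (intro allI impI)
      fix \<mu> assume c: "measure_on G \<mu> \<and> symmetric_measure G \<mu> \<and> non_degenerate G \<mu> \<and> liouville G \<mu>"
      have r: "rws G H \<mu>" using R c by simp
      interpret rws G H \<mu> by (rule r)
      have "liouville (G\<lparr>carrier := H\<rparr>) muH" using c by (simp add: liouville_transfer)
      hence "measure_on (G\<lparr>carrier := H\<rparr>) muH \<and> symmetric_measure (G\<lparr>carrier := H\<rparr>) muH
          \<and> non_degenerate (G\<lparr>carrier := H\<rparr>) muH \<and> liouville (G\<lparr>carrier := H\<rparr>) muH"
        using muH_on muH_sym muH_nd by simp
      moreover have "\<forall>\<nu>. measure_on (G\<lparr>carrier := H\<rparr>) \<nu> \<and> symmetric_measure (G\<lparr>carrier := H\<rparr>) \<nu>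
          \<and> non_degenerate (G\<lparr>carrier := H\<rparr>) \<nu> \<and> liouville (G\<lparr>carrier := H\<rparr>) \<nu>
          \<longrightarrow> alg_recurrent (G\<lparr>carrier := H\<rparr>) \<nu>"
        using AR unfolding liouville_AR_group_def .
      ultimately have "alg_recurrent (G\<lparr>carrier := H\<rparr>) muH" by blast
      thus "alg_recurrent G \<mu>" by (rule AR_transfer)
    qed
  qed
qed

end
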